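(* Let Assumptions 1 and 2 hold and let $K<\mu<1$. There exists a constant $c_\mu>0$ such that, for every $\delta\in(0,K)$, if $x^{(0)}\in U\cap\Sigma$ satisfies $0<\|r^{(0)}\|_2\le c_\mu\delta^2$ and one runs version P of the adaptive-depth Anderson–Pulay acceleration with parameter $\delta$ (or version A when $\Sigma=\mathbb{R}^n$), then the sequences $(x^{(k)})$, $(r^{(k)})$ are well defined and, as long as $r^{(k)}\neq0$: $$m_k\le\min(k,p),\qquad \|c^{(k)}\|_\infty\le C_{m_k}\Big(1+\Big(\frac{\mu}{1-\mu}\Big)^{m_k}\Big),\qquad \|r^{(k+1)}\|_2\le\mu\|r^{(k)}\|_2,$$ where $C_{m_k}>0$ depends only on $m_k$; in particular the method is locally q-linearly convergent. Moreover, if $k-m_k\ge1$, then $\|r^{(k)}\|_2\le\delta\|r^{(k-m_k-1)}\|_2$.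
   Context: All norms $\|\cdot\|_2$ are Euclidean. Let $n,p\ge1$ be integers, $\Sigma$ a smooth submanifold of $\mathbb{R}^n$, $V\subset\mathbb{R}^n$ open, $f\in\mathscr{C}^2(V,\mathbb{R}^p)$, $g\in\mathscr{C}^2(V,\Sigma)$, and $x_*\in V\cap\Sigma$ with $g(x_* )=x_*$, $f(x_* )=0$. Assumption 1: there is $K\in(0,1)$ with $\|f(g(x))\|_2\le K\|f(x)\|_2$ for all $x\in V\cap g^{-1}(V)\cap\Sigma$. Assumption 2: there is $\sigma>0$ with $\sigma\|x-x_*\|_2\le\|f(x)\|_2$ for all $x\in V\cap\Sigma$. $U\subset V\cap g^{-1}(V)$ is a fixed open neighbourhood of $x_*$ such that: (i) for all $x,y\in U$, $\|f(x)-f(y)\|_2\le 2\|\mathrm{D}f(x_* )\|_2\|x-y\|_2$ and $\|f(g(x))-f(g(y))\|_2\le 2\|\mathrm{D}f(x_* )\circ \mathrm{D}g(x_* )\|_2\|x-y\|_2$; (ii) there are $L,L'>0$ with $\|f(x)-\mathrm{D}f(x_* )(x-x_* )\|_2\le\frac L2\|x-x_*\|_2^2$ and $\|g(x)-x_*-\mathrm{D}g(x_* )(x-x_* )\|_2\le\frac{L'}2\|x-x_*\|_2^2$ on $U$; (iii) $U$ is a tubular neighbourhood of $\Sigma\cap U$ on which the nearest-point projection $P_\Sigma$ onto $\Sigma$ is well defined and smooth, and for some $M>0$, $\|P_\Sigma(x)-(x_*+P_{T_{x_*}\Sigma}(x-x_* ))\|_2\le\frac M2\|x-x_*\|_2^2$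 on $U$ ($P_{T_{x_*}\Sigma}$ the orthogonal projector onto the tangent space at $x_*$). Adaptive-depth Anderson–Pulay acceleration with parameter $\delta>0$: given $x^{(0)}$, set $r^{(0)}=f(x^{(0)})$, $m_0=0$. At step $k$: if $m_k=0$, set $c^{(k)}=(1)$ and $x^{(k+1)}=g(x^{(k)})$; otherwise let $c^{(k)}=(c^{(k)}_0,\dots,c^{(k)}_{m_k})$ minimise $\|\sum_{i=0}^{m_k}c_i r^{(k-m_k+i)}\|_2$ subject to $\sum_i c_i=1$, and set $x^{(k+1)}=g\big(\sum_{i=0}^{m_k}c^{(k)}_i x^{(k-m_k+i)}\big)$ (version P) or $x^{(k+1)}=\sum_{i=0}^{m_k}c^{(k)}_i g(x^{(k-m_k+i)})$ (version A, used only when $\Sigma=\mathbb{R}^n$). Then $r^{(k+1)}=f(x^{(k+1)})$ and $m_{k+1}$ is the largest integer $m\le m_k+1$ such that $\delta\|r^{(i)}\|_2<\|r^{(k+1)}\|_2$ for all $i$ with $k+1-m\le i\le k$. Convention: if $r^{(k_{\rm stop})}=0$ for some $k_{\rm stop}$, then $x^{(k)}=x^{(k_{\rm stop})}$, $r^{(k)}=0$, $m_k=0$ for all $k\ge k_{\rm stop}$. *)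

theory Defs
  imports "HOL-Analysis.Analysis"
begin

fun iter_dd :: "('a::real_normed_vector \<Rightarrow> 'b::real_normed_vector) \<Rightarrow> 'a list \<Rightarrow> 'a \<Rightarrow> 'b" where
  "iter_dd h [] = h"
| "iter_dd h (v # vs) = (\<lambda>x. frechet_derivative (iter_dd h vs) (at x) v)"

definition C_k_on :: "nat \<Rightarrow> 'a::real_normed_vector set \<Rightarrow> ('a \<Rightarrow> 'b::real_normed_vector) \<Rightarrow> bool" where
  "C_k_on k S h \<longleftrightarrow>
     (\<forall>vs. length vs < k \<longrightarrow> (\<forall>x\<in>S. iter_dd h vs differentiable (at x))) \<and>
     (\<forall>vs. length vs = k \<longrightarrow> continuous_on S (iter_dd h vs))"

definition smooth_on :: "'a::real_normed_vector set \<Rightarrow> ('a \<Rightarrow> 'b::real_normed_vector) \<Rightarrow> bool" where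
  "smooth_on S h \<longleftrightarrow> (\<forall>k. C_k_on k S h)"

definition is_smooth_submanifold :: "'a::euclidean_space set \<Rightarrow> bool" where
  "is_smooth_submanifold \<Sigma> \<longleftrightarrow>
     (\<forall>a\<in>\<Sigma>. \<exists>W (\<phi>::'a \<Rightarrow> 'a) \<psi> T.
        open W \<and> a \<in> W \<and> open (\<phi> ` W) \<and> smooth_on W \<phi> \<and> smooth_on (\<phi> ` W) \<psi> \<and>
        (\<forall>x\<in>W. \<psi> (\<phi> x) = x) \<and> subspace T \<and> \<phi> ` (W \<inter> \<Sigma>) = \<phi> ` W \<inter> T)"

definition tangent_space :: "'a::euclidean_space set \<Rightarrow> 'a \<Rightarrow> 'a set" where
  "tangent_space \<Sigma> a = {v. \<exists>\<gamma>::real \<Rightarrow> 'a. \<gamma> 0 = a \<and> (\<exists>e>0. \<forall>t. \<bar>t\<bar> < e \<longrightarrow> \<gamma> t \<in> \<Sigma>) \<and>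
                                  (\<gamma> has_vector_derivative v) (at 0)}"

definition is_LS_min :: "(nat \<Rightarrow> 'b::real_normed_vector) \<Rightarrow> nat \<Rightarrow> nat \<Rightarrow> (nat \<Rightarrow> real) \<Rightarrow> bool" where
  "is_LS_min r k mk d \<longleftrightarrow>
     (\<Sum>i\<le>mk. d i) = 1 \<and>
     (\<forall>e. (\<Sum>i\<le>mk. e i) = 1 \<longrightarrow>
        norm (\<Sum>i\<le>mk. d i *\<^sub>R r (k - mk + i)) \<le> norm (\<Sum>i\<le>mk. e i *\<^sub>R r (k - mk + i)))"

text \<open>A run of adaptive-depth Anderson-Pulay acceleration with parameter delta.
  vP = True: version P; vP = False: version A.  c k i is c^(k)_i (0 \<le> i \<le> m k).\<close>
definition AAP_run :: "bool \<Rightarrow> ('a::euclidean_space \<Rightarrow> 'b::euclidean_space) \<Rightarrow> ('a \<Rightarrow> 'a) \<Rightarrow> real \<Rightarrow>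
    (nat \<Rightarrow> 'a) \<Rightarrow> (nat \<Rightarrow> 'b) \<Rightarrow> (nat \<Rightarrow> nat) \<Rightarrow> (nat \<Rightarrow> nat \<Rightarrow> real) \<Rightarrow> bool" where
  "AAP_run vP f g \<delta> x r m c \<longleftrightarrow>
     (\<forall>k. r k = f (x k)) \<and> m 0 = 0 \<and>
     (\<forall>k. r k = 0 \<longrightarrow> (\<forall>j\<ge>k. x j = x k \<and> r j = 0 \<and> m j = 0)) \<and>
     (\<forall>k. (\<forall>j\<le>k. r j \<noteq> 0) \<longrightarrow>
        (if m k = 0 then c k 0 = 1 \<and> x (Suc k) = g (x k)
         else is_LS_min r k (m k) (c k) \<and>
              x (Suc k) = (if vP then g (\<Sum>i\<le>m k. c k i *\<^sub>R x (k - m k + i))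
                           else (\<Sum>i\<le>m k. c k i *\<^sub>R g (x (k - m k + i))))) \<and>
        m (Suc k) = (GREATEST mm. mm \<le> m k + 1 \<and>
                       (\<forall>i. Suc k - mm \<le> i \<and> i \<le> k \<longrightarrow> \<delta> * norm (r i) < norm (r (Suc k)))))"

end

theory Submission
  imports Defs
begin


lemma cp_affine_orth:
  fixes S :: "'a::euclidean_space set"
  assumes "affine S" "closed S" "S \<noteq> {}" "h \<in> S"
  shows "h \<bullet> closest_point S 0 = closest_point S 0 \<bullet> closest_point S 0"
proof -
  let ?w = "closest_point S 0"
  have w: "?w \<in> S" "\<forall>y\<in>S. dist 0 ?w \<le> dist 0 y"
    using closest_point_exists[OF assms(2,3), of 0] by blast+
  have cv: "convex S" using assms(1) affine_imp_convex by blast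
  have 1: "inner (0 - ?w) (h - ?w) \<le> 0"
    by (rule any_closest_point_dot[OF cv assms(2) w(1) assms(4) w(2)])
  have h2: "2 *\<^sub>R ?w + (-1) *\<^sub>R h \<in> S"
    by (rule mem_affine[OF assms(1) w(1) assms(4)]) simp
  have 2: "inner (0 - ?w) ((2 *\<^sub>R ?w + (-1) *\<^sub>R h) - ?w) \<le> 0"
    by (rule any_closest_point_dot[OF cv assms(2) w(1) h2 w(2)])
  from 1 2 show ?thesis
    by (simp add: inner_diff_left inner_diff_right inner_add_right inner_commute algebra_simps)
qed

lemma affine_hull_index:
  fixes v :: "nat \<Rightarrow> 'a::euclidean_space"
  assumes "finite I" "y \<in> affine hull (v ` I)"
  shows "\<exists>e. (\<Sum>i\<in>I. e i) = 1 \<and> y = (\<Sum>i\<in>I. e i *\<^sub>R v i)"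
proof -
  have fin: "finite (v ` I)" using assms(1) by simp
  obtain u where u: "sum u (v ` I) = 1" "(\<Sum>p\<in>v ` I. u p *\<^sub>R p) = y"
    using assms(2) affine_hull_finite[OF fin] by auto
  define F where "F p = {j. j \<in> I \<and> v j = p}" for p
  define e where "e i = u (v i) / real (card (F (v i)))" for i
  have cardpos: "card (F p) > 0" if "p \<in> v ` I" for p
  proof -
    have "finite (F p)" unfolding F_def using assms(1) by simp
    moreover have "F p \<noteq> {}" using that unfolding F_def by auto
    ultimately show ?thesis by (simp add: card_gt_0_iff)
  qed
  have inner1: "(\<Sum>i\<in>F p. e i) = u p" if "p \<in> v ` I" for p
  proof -
    have "(\<Sum>i\<in>F p. e i) = (\<Sum>i\<in>F p. u p / real (card (F p)))"
      by (rule sum.cong) (auto simp: e_def F_def)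
    also have "\<dots> = u p" using cardpos[OF that] by simp
    finally show ?thesis .
  qed
  have inner2: "(\<Sum>i\<in>F p. e i *\<^sub>R v i) = u p *\<^sub>R p" if "p \<in> v ` I" for p
  proof -
    have "(\<Sum>i\<in>F p. e i *\<^sub>R v i) = (\<Sum>i\<in>F p. e i) *\<^sub>R p"
      by (simp add: scaleR_sum_left F_def)
    then show ?thesis using inner1[OF that] by simp
  qed
  have "(\<Sum>i\<in>I. e i) = (\<Sum>p\<in>v ` I. \<Sum>i\<in>F p. e i)"
    unfolding F_def by (rule sum.image_gen[OF assms(1)])
  also have "\<dots> = 1" using inner1 u(1) by simp
  finally have s1: "(\<Sum>i\<in>I. e i) = 1" .
  have "(\<Sum>i\<in>I. e i *\<^sub>R v i) = (\<Sum>p\<in>v ` I. \<Sum>i\<in>F p. e i *\<^sub>R v i)"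
    unfolding F_def by (rule sum.image_gen[OF assms(1)])
  also have "\<dots> = y" using inner2 u(2) by simp
  finally show ?thesis using s1 by auto
qed


lemma LS_coef_bound:
  fixes v :: "nat \<Rightarrow> 'a::euclidean_space" and \<mu> :: real
  assumes mu: "0 \<le> \<mu>" "\<mu> < 1"
  shows "(\<forall>j\<le>n. v (a+j) \<noteq> 0) \<Longrightarrow>
    (\<forall>j. 1 \<le> j \<longrightarrow> j \<le> n \<longrightarrow> (\<forall>h\<in>affine hull (v ` {a..a+(j-1)}). norm (v (a+j)) \<le> \<mu> * norm h)) \<Longrightarrow>
    0 < norm (closest_point (affine hull (v ` {a..a+(n-1)})) 0) \<and>
    (\<forall>c. (\<Sum>i\<in>{a..a+n}. \<bar>c i\<bar>) \<le> (2*(3/(1-\<mu>))^n - 1) *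
        (\<bar>\<Sum>i\<in>{a..a+n}. c i\<bar> + norm (\<Sum>i\<in>{a..a+n}. c i *\<^sub>R v i) /
            norm (closest_point (affine hull (v ` {a..a+(n-1)})) 0)))"
proof (induction n)
  case 0
  have e: "affine hull (v ` {a..a+(0-1)}) = {v a}" by simp
  have cp: "closest_point {v a} 0 = v a"
    using closest_point_in_set[of "{v a}" 0] by auto
  have nz: "v a \<noteq> 0" using 0(1) by auto
  show ?case
  proof (intro conjI allI)
    show "0 < norm (closest_point (affine hull (v ` {a..a+(0-1)})) 0)"
      unfolding e cp using nz by simp
    fix c :: "nat \<Rightarrow> real"
    have "\<bar>c a\<bar> \<le> \<bar>c a\<bar> + norm (c a *\<^sub>R v a) / norm (v a)" by simp
    then show "(\<Sum>i\<in>{a..a+0}. \<bar>c i\<bar>) \<le> (2*(3/(1-\<mu>))^0 - 1) *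
        (\<bar>\<Sum>i\<in>{a..a+0}. c i\<bar> + norm (\<Sum>i\<in>{a..a+0}. c i *\<^sub>R v i) /
            norm (closest_point (affine hull (v ` {a..a+(0-1)})) 0))"
      unfolding e cp by simp
  qed
next
  case (Suc n)
  let ?AH = "affine hull (v ` {a..a+n})"
  define w where "w = closest_point ?AH 0"
  define D where "D = norm (closest_point (affine hull (v ` {a..a+(n-1)})) 0)"
  define vl where "vl = v (Suc (a+n))"
  define A where "A = 2*(3/(1-\<mu>))^n - 1"
  define \<beta> where "\<beta> = 1/(1-\<mu>)"
  have \<beta>1: "1 \<le> \<beta>" using mu unfolding \<beta>_def by (simp add: field_simps)
  have A1: "1 \<le> A"
  proof -
    have "1 \<le> (3/(1-\<mu>))^n" using mu by (intro one_le_power) (simp add: field_simps)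
    then show ?thesis unfolding A_def by simp
  qed
  have ASuc: "2*(3/(1-\<mu>))^(Suc n) - 1 = 3*\<beta>*(A+1) - 1"
    unfolding A_def \<beta>_def by (simp add: field_simps)
  have IH: "0 < D \<and> (\<forall>c. (\<Sum>i\<in>{a..a+n}. \<bar>c i\<bar>) \<le> A *
        (\<bar>\<Sum>i\<in>{a..a+n}. c i\<bar> + norm (\<Sum>i\<in>{a..a+n}. c i *\<^sub>R v i) / D))"
    unfolding D_def A_def
    by (rule Suc.IH) (use Suc.prems in auto)
  have ne: "?AH \<noteq> {}" by auto
  have wS: "w \<in> ?AH" unfolding w_def using closest_point_in_set[OF closed_affine_hull ne] .
  have wmin: "norm w \<le> norm h" if "h \<in> ?AH" for h
    using closest_point_le[OF closed_affine_hull that, of 0] unfolding w_def by simp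
  have orth: "h \<bullet> w = w \<bullet> w" if "h \<in> ?AH" for h
    unfolding w_def by (rule cp_affine_orth[OF affine_affine_hull closed_affine_hull ne that])
  have eqn: "a + (Suc n - 1) = a + n" by simp
  have Hl: "norm vl \<le> \<mu> * norm w"
    using Suc.prems(2) wS unfolding vl_def eqn by (metis add_Suc_right eqn le_add1 le_refl plus_1_eq_Suc)
  have vlnz: "vl \<noteq> 0" using Suc.prems(1) unfolding vl_def by (metis add_Suc_right le_refl)
  have wpos: "0 < norm w"
  proof (rule ccontr)
    assume "\<not> 0 < norm w"
    then have "norm vl \<le> 0" using Hl mu by (simp add: mult_nonneg_nonpos)
    then show False using vlnz by simp
  qed
  have Dge: "norm w \<le> D"
  proof -
    have "affine hull (v ` {a..a+(n-1)}) \<subseteq> ?AH" by (intro hull_mono image_mono) auto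
    moreover have "closest_point (affine hull (v ` {a..a+(n-1)})) 0 \<in> affine hull (v ` {a..a+(n-1)})"
      by (rule closest_point_in_set) auto
    ultimately show ?thesis unfolding D_def using wmin by blast
  qed
  show ?case
  proof (intro conjI allI)
    show "0 < norm (closest_point (affine hull (v ` {a..a+(Suc n-1)})) 0)"
      using wpos unfolding w_def eqn .
    fix c :: "nat \<Rightarrow> real"
    define t where "t = c (Suc (a+n))"
    define \<sigma>' where "\<sigma>' = (\<Sum>i\<in>{a..a+n}. c i)"
    define u' where "u' = (\<Sum>i\<in>{a..a+n}. c i *\<^sub>R v i)"
    define S' where "S' = (\<Sum>i\<in>{a..a+n}. \<bar>c i\<bar>)"
    have sp1: "(\<Sum>i\<in>{a..a+Suc n}. c i) = \<sigma>' + t" unfolding \<sigma>'_def t_def by simp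
    have sp2: "(\<Sum>i\<in>{a..a+Suc n}. c i *\<^sub>R v i) = u' + t *\<^sub>R vl" unfolding u'_def t_def vl_def by simp
    have sp3: "(\<Sum>i\<in>{a..a+Suc n}. \<bar>c i\<bar>) = S' + \<bar>t\<bar>" unfolding S'_def t_def by simp
    define \<sigma> where "\<sigma> = \<sigma>' + t"
    define u where "u = u' + t *\<^sub>R vl"
    have u'w: "u' \<bullet> w = \<sigma>' * (w \<bullet> w)"
    proof -
      have "u' \<bullet> w = (\<Sum>i\<in>{a..a+n}. c i * (v i \<bullet> w))"
        unfolding u'_def by (simp add: inner_sum_left)
      also have "\<dots> = (\<Sum>i\<in>{a..a+n}. c i * (w \<bullet> w))"
        by (rule sum.cong) (auto simp: orth hull_inc)
      finally show ?thesis unfolding \<sigma>'_def by (simp add: sum_distrib_right)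
    qed
    have uw: "u \<bullet> w = \<sigma> * (w \<bullet> w) + t * (vl \<bullet> w - w \<bullet> w)"
      unfolding u_def \<sigma>_def using u'w by (simp add: inner_add_left algebra_simps)
    have ww: "w \<bullet> w = norm w ^ 2" by (simp add: power2_norm_eq_inner)
    have vlw: "\<bar>vl \<bullet> w\<bar> \<le> \<mu> * norm w ^ 2"
    proof -
      have "\<bar>vl \<bullet> w\<bar> \<le> norm vl * norm w" by (rule Cauchy_Schwarz_ineq2)
      also have "\<dots> \<le> \<mu> * norm w * norm w" using Hl by (simp add: mult_right_mono)
      finally show ?thesis by (simp add: power2_eq_square)
    qed
    have uwb: "\<bar>u \<bullet> w\<bar> \<le> norm u * norm w" by (rule Cauchy_Schwarz_ineq2)
    have gap: "(1 - \<mu>) * norm w ^ 2 \<le> \<bar>vl \<bullet> w - w \<bullet> w\<bar>" using vlw unfolding ww by (simp add: algebra_simps abs_if split: if_splits; smt (verit) zero_le_power2)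
    have tb0: "\<bar>t\<bar> * ((1 - \<mu>) * norm w ^ 2) \<le> \<bar>\<sigma>\<bar> * norm w ^ 2 + norm u * norm w"
    proof -
      have "\<bar>t\<bar> * ((1 - \<mu>) * norm w ^ 2) \<le> \<bar>t\<bar> * \<bar>vl \<bullet> w - w \<bullet> w\<bar>"
        using gap by (simp add: mult_left_mono)
      also have "\<dots> = \<bar>u \<bullet> w - \<sigma> * (w \<bullet> w)\<bar>" using uw by (simp add: abs_mult)
      also have "\<dots> \<le> \<bar>u \<bullet> w\<bar> + \<bar>\<sigma>\<bar> * norm w ^ 2" unfolding ww using abs_triangle_ineq4[of "u \<bullet> w" "\<sigma> * norm w ^ 2"] by (simp add: abs_mult)
      finally show ?thesis using uwb by linarith
    qed
    define X where "X = \<bar>\<sigma>\<bar> + norm u / norm w"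
    have tb: "\<bar>t\<bar> \<le> \<beta> * X"
    proof -
      have "\<bar>t\<bar> * (1 - \<mu>) * norm w ^ 2 \<le> (\<bar>\<sigma>\<bar> + norm u / norm w) * norm w ^ 2"
        using tb0 wpos by (simp add: algebra_simps power2_eq_square)
      then have "\<bar>t\<bar> * (1 - \<mu>) \<le> \<bar>\<sigma>\<bar> + norm u / norm w"
        using wpos by (simp add: mult_le_cancel_right)
      then show ?thesis unfolding \<beta>_def X_def using mu by (simp add: field_simps)
    qed
    have u'b: "norm u' \<le> norm u + \<bar>t\<bar> * (\<mu> * norm w)"
    proof -
      have "u' = u - t *\<^sub>R vl" unfolding u_def by simp
      then have "norm u' \<le> norm u + norm (t *\<^sub>R vl)" using norm_triangle_ineq4[of u "t *\<^sub>R vl"] by simp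
      also have "norm (t *\<^sub>R vl) \<le> \<bar>t\<bar> * (\<mu> * norm w)" using Hl by (simp add: mult_left_mono)
      finally show ?thesis by simp
    qed
    have q1: "norm u' / D \<le> norm u' / norm w"
      using wpos Dge by (simp add: frac_le)
    have q2: "norm u' / norm w \<le> norm u / norm w + \<mu> * \<bar>t\<bar>"
      using u'b wpos by (simp add: field_simps)
    have s'b: "\<bar>\<sigma>'\<bar> \<le> \<bar>\<sigma>\<bar> + \<bar>t\<bar>" unfolding \<sigma>_def by linarith
    have S'b: "S' \<le> A * (\<bar>\<sigma>'\<bar> + norm u' / D)" using IH unfolding S'_def \<sigma>'_def u'_def by blast
    have ex: "(1 + \<mu>) * \<bar>t\<bar> = \<bar>t\<bar> + \<mu> * \<bar>t\<bar>" by (simp add: algebra_simps)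
    have in1: "\<bar>\<sigma>'\<bar> + norm u' / D \<le> X + (1 + \<mu>) * \<bar>t\<bar>"
      using q1 q2 s'b ex unfolding X_def by linarith
    have "A * (\<bar>\<sigma>'\<bar> + norm u' / D) \<le> A * (X + (1 + \<mu>) * \<bar>t\<bar>)"
      using in1 A1 by (simp add: mult_left_mono)
    then have S'b2: "S' \<le> A * X + A * ((1 + \<mu>) * \<bar>t\<bar>)" using S'b by (simp add: distrib_left)
    have X0: "0 \<le> X" unfolding X_def using wpos by simp
    have "A * ((1 + \<mu>) * \<bar>t\<bar>) \<le> A * (2 * \<bar>t\<bar>)"
      using mu A1 by (intro mult_left_mono mult_right_mono) auto
    then have "S' + \<bar>t\<bar> \<le> A * X + (1 + 2 * A) * \<bar>t\<bar>"
      using S'b2 by (simp add: algebra_simps)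
    also have "\<dots> \<le> A * X + (1 + 2 * A) * (\<beta> * X)"
      using tb A1 by (intro add_left_mono mult_left_mono) auto
    also have "\<dots> = (A + \<beta> + 2 * A * \<beta>) * X" by (simp add: algebra_simps)
    also have "\<dots> \<le> (3*\<beta>*(A+1) - 1) * X"
    proof (rule mult_right_mono[OF _ X0])
      have "A + 1 \<le> \<beta> * (A + 1)" using \<beta>1 A1 by (simp add: mult_right_mono)
      then show "A + \<beta> + 2 * A * \<beta> \<le> 3*\<beta>*(A+1) - 1" using \<beta>1 by (simp add: algebra_simps)
    qed
    finally have fin: "S' + \<bar>t\<bar> \<le> (3*\<beta>*(A+1) - 1) * X" .
    show "(\<Sum>i\<in>{a..a+Suc n}. \<bar>c i\<bar>) \<le> (2*(3/(1-\<mu>))^(Suc n) - 1) *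
        (\<bar>\<Sum>i\<in>{a..a+Suc n}. c i\<bar> + norm (\<Sum>i\<in>{a..a+Suc n}. c i *\<^sub>R v i) /
            norm (closest_point (affine hull (v ` {a..a+(Suc n-1)})) 0))"
      unfolding sp1 sp2 sp3 ASuc eqn w_def[symmetric] using fin unfolding X_def \<sigma>_def u_def by simp
  qed
qed


lemma sum_shift_abs:
  fixes F :: "nat \<Rightarrow> 'b::comm_monoid_add"
  shows "(\<Sum>i\<le>m. F i) = (\<Sum>j\<in>{a..a+m}. F (j - a))"
proof -
  have "(\<Sum>j\<in>{0+a..m+a}. F (j - a)) = (\<Sum>i\<in>{0..m}. F (i + a - a))"
    by (rule sum.shift_bounds_cl_nat_ivl)
  then show ?thesis by (simp add: atMost_atLeast0 add.commute)
qed

lemma sum_pad: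
  fixes e :: "nat \<Rightarrow> real" and r :: "nat \<Rightarrow> 'a::real_vector"
  assumes "finite J" "I \<subseteq> J"
  shows "(\<Sum>j\<in>J. (if j \<in> I then e j else 0)) = (\<Sum>j\<in>I. e j)"
    and "(\<Sum>j\<in>J. (if j \<in> I then e j else 0) *\<^sub>R r j) = (\<Sum>j\<in>I. e j *\<^sub>R r j)"
proof -
  have "J \<inter> I = I" using assms by auto
  then show "(\<Sum>j\<in>J. (if j \<in> I then e j else 0)) = (\<Sum>j\<in>I. e j)"
    using sum.inter_restrict[OF assms(1), of e I] by simp
  have "(\<Sum>j\<in>J. (if j \<in> I then e j else 0) *\<^sub>R r j) = (\<Sum>j\<in>J. (if j \<in> I then e j *\<^sub>R r j else 0))"
    by (rule sum.cong) auto
  also have "\<dots> = (\<Sum>j\<in>J \<inter> I. e j *\<^sub>R r j)"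
    using sum.inter_restrict[OF assms(1), of "\<lambda>j. e j *\<^sub>R r j" I] by simp
  finally show "(\<Sum>j\<in>J. (if j \<in> I then e j else 0) *\<^sub>R r j) = (\<Sum>j\<in>I. e j *\<^sub>R r j)"
    using \<open>J \<inter> I = I\<close> by simp
qed

lemma LS_min_le_combo:
  fixes r :: "nat \<Rightarrow> 'a::real_normed_vector"
  assumes "is_LS_min r (a+m) m c" "I \<subseteq> {a..a+m}" "(\<Sum>j\<in>I. e j) = 1"
  shows "norm (\<Sum>i\<le>m. c i *\<^sub>R r (a + i)) \<le> norm (\<Sum>j\<in>I. e j *\<^sub>R r j)"
proof -
  define e' where "e' j = (if j \<in> I then e j else 0)" for j
  define d where "d i = e' (a + i)" for i
  have fin: "finite {a..a+m}" by simp
  have s1: "(\<Sum>i\<le>m. d i) = 1"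
    unfolding d_def sum_shift_abs[of _ m a] using sum_pad(1)[OF fin assms(2), of e] assms(3)
    by (simp add: e'_def)
  have s2: "(\<Sum>i\<le>m. d i *\<^sub>R r (a + m - m + i)) = (\<Sum>j\<in>I. e j *\<^sub>R r j)"
    unfolding d_def sum_shift_abs[of _ m a] using sum_pad(2)[OF fin assms(2), of e r]
    by (simp add: e'_def)
  have "norm (\<Sum>i\<le>m. c i *\<^sub>R r (a + m - m + i)) \<le> norm (\<Sum>i\<le>m. d i *\<^sub>R r (a + m - m + i))"
    using assms(1) s1 unfolding is_LS_min_def by blast
  then show ?thesis using s2 by simp
qed

lemma LS_min_le_hull:
  fixes r :: "nat \<Rightarrow> 'a::euclidean_space"
  assumes "is_LS_min r (a+m) m c" "I \<subseteq> {a..a+m}" "h \<in> affine hull (r ` I)"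
  shows "norm (\<Sum>i\<le>m. c i *\<^sub>R r (a + i)) \<le> norm h"
proof -
  have "finite I" using assms(2) finite_subset by blast
  then obtain e where "(\<Sum>i\<in>I. e i) = 1" "h = (\<Sum>i\<in>I. e i *\<^sub>R r i)"
    using affine_hull_index assms(3) by blast
  then show ?thesis using LS_min_le_combo[OF assms(1,2)] by simp
qed


lemma shift_combo:
  fixes r :: "nat \<Rightarrow> 'a::real_vector"
  shows "(\<Sum>i\<le>m. c i *\<^sub>R r (a + i)) = (\<Sum>j\<in>{a..a+m}. c (j - a) *\<^sub>R r j)"
proof -
  have "(\<Sum>i\<le>m. c i *\<^sub>R r (a + i)) = (\<Sum>j\<in>{a..a+m}. c (j - a) *\<^sub>R r (a + (j - a)))"
    by (rule sum_shift_abs)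
  also have "\<dots> = (\<Sum>j\<in>{a..a+m}. c (j - a) *\<^sub>R r j)" by (rule sum.cong) auto
  finally show ?thesis .
qed

lemma LS_window:
  fixes r :: "nat \<Rightarrow> 'a::euclidean_space" and \<mu> :: real
  assumes mu: "0 \<le> \<mu>" "\<mu> < 1"
    and nz: "\<forall>j\<le>m. r (a+j) \<noteq> 0"
    and H: "\<forall>j. 1 \<le> j \<longrightarrow> j \<le> m \<longrightarrow> (\<forall>h\<in>affine hull (r ` {a..a+(j-1)}). norm (r (a+j)) \<le> \<mu> * norm h)"
    and LS: "is_LS_min r (a+m) m c"
  shows "(\<Sum>i\<le>m. \<bar>c i\<bar>) \<le> 2 * (2*(3/(1-\<mu>))^m - 1)"
    and "\<forall>d. is_LS_min r (a+m) m d \<longrightarrow> (\<forall>i\<le>m. d i = c i)"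
    and "m \<le> DIM('a)"
proof -
  define D where "D = norm (closest_point (affine hull (r ` {a..a+(m-1)})) 0)"
  define A where "A = 2*(3/(1-\<mu>))^m - 1"
  have G: "0 < D \<and> (\<forall>c. (\<Sum>i\<in>{a..a+m}. \<bar>c i\<bar>) \<le> A *
        (\<bar>\<Sum>i\<in>{a..a+m}. c i\<bar> + norm (\<Sum>i\<in>{a..a+m}. c i *\<^sub>R r i) / D))"
    unfolding D_def A_def by (rule LS_coef_bound[OF mu nz H])
  have A0: "0 \<le> A"
  proof -
    have "1 \<le> (3/(1-\<mu>))^m" using mu by (intro one_le_power) (simp add: field_simps)
    then show ?thesis unfolding A_def by simp
  qed
  have zero: "\<forall>j\<in>{a..a+m}. z j = 0" if "(\<Sum>j\<in>{a..a+m}. z j) = 0" "(\<Sum>j\<in>{a..a+m}. z j *\<^sub>R r j) = 0" for z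
  proof -
    have "(\<Sum>j\<in>{a..a+m}. \<bar>z j\<bar>) \<le> A * (\<bar>\<Sum>j\<in>{a..a+m}. z j\<bar> + norm (\<Sum>j\<in>{a..a+m}. z j *\<^sub>R r j) / D)"
      using G by blast
    then have "(\<Sum>j\<in>{a..a+m}. \<bar>z j\<bar>) \<le> 0" using that by simp
    then have "(\<Sum>j\<in>{a..a+m}. \<bar>z j\<bar>) = 0" by (simp add: sum_nonneg antisym)
    then show ?thesis by (simp add: sum_nonneg_eq_0_iff)
  qed
  let ?rho = "\<Sum>i\<le>m. c i *\<^sub>R r (a + i)"
  have LS': "(\<Sum>i\<le>m. c i) = 1" using LS unfolding is_LS_min_def by simp
  have rhoD: "norm ?rho \<le> D"
  proof -
    have ne: "affine hull (r ` {a..a+(m-1)}) \<noteq> {}" by auto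
    show ?thesis unfolding D_def
      by (rule LS_min_le_hull[OF LS _ closest_point_in_set[OF closed_affine_hull ne]]) auto
  qed
  have "(\<Sum>i\<le>m. \<bar>c i\<bar>) = (\<Sum>j\<in>{a..a+m}. \<bar>c (j - a)\<bar>)" by (rule sum_shift_abs)
  also have "\<dots> \<le> A * (\<bar>\<Sum>j\<in>{a..a+m}. c (j - a)\<bar> + norm (\<Sum>j\<in>{a..a+m}. c (j - a) *\<^sub>R r j) / D)"
    using G[THEN conjunct2, rule_format, of "\<lambda>j. c (j - a)"] by simp
  also have "\<dots> = A * (1 + norm ?rho / D)"
    using LS' sum_shift_abs[of c m a] shift_combo[of c r a m] by simp
  also have "\<dots> \<le> A * 2"
  proof -
    have "norm ?rho / D \<le> 1" using rhoD G by simp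
    then show ?thesis using A0 by (intro mult_left_mono) auto
  qed
  finally show "(\<Sum>i\<le>m. \<bar>c i\<bar>) \<le> 2 * (2*(3/(1-\<mu>))^m - 1)" unfolding A_def by simp
  show "\<forall>d. is_LS_min r (a+m) m d \<longrightarrow> (\<forall>i\<le>m. d i = c i)"
  proof (intro allI impI)
    fix d i assume d: "is_LS_min r (a+m) m d" and i: "i \<le> m"
    let ?a = "\<Sum>i\<le>m. d i *\<^sub>R r (a + i)"
    have sd: "(\<Sum>i\<le>m. d i) = 1" using d unfolding is_LS_min_def by simp
    have le1: "norm ?a \<le> norm ?rho" using d LS' unfolding is_LS_min_def by simp
    have le2: "norm ?rho \<le> norm ?a" using LS sd unfolding is_LS_min_def by simp
    have sh: "(\<Sum>i\<le>m. (1/2 * d i + 1/2 * c i)) = 1" using sd LS' by (simp add: sum.distrib sum_divide_distrib[symmetric])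
    have "norm ?a \<le> norm (\<Sum>i\<le>m. (1/2 * d i + 1/2 * c i) *\<^sub>R r (a + i))"
      using d sh unfolding is_LS_min_def by simp
    also have "(\<Sum>i\<le>m. (1/2 * d i + 1/2 * c i) *\<^sub>R r (a + i)) = (1/2) *\<^sub>R (?a + ?rho)"
      by (simp add: scaleR_add_left sum.distrib scaleR_sum_right scaleR_add_right)
    finally have h: "2 * norm ?a \<le> norm (?a + ?rho)" by simp
    have par: "norm (?a - ?rho)^2 + norm (?a + ?rho)^2 = 2 * norm ?a ^2 + 2 * norm ?rho ^ 2"
      by (simp add: power2_norm_eq_inner inner_add_left inner_add_right inner_diff_left inner_diff_right inner_commute algebra_simps)
    have "(2 * norm ?a)^2 \<le> norm (?a + ?rho)^2" using h by (intro power_mono) auto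
    then have "norm (?a - ?rho)^2 \<le> 0" using par le1 le2 by (simp add: power2_eq_square)
    then have eq: "?a - ?rho = 0" by simp
    define z where "z j = d (j - a) - c (j - a)" for j
    have z1: "(\<Sum>j\<in>{a..a+m}. z j) = 0"
      using sd LS' sum_shift_abs[of d m a] sum_shift_abs[of c m a] unfolding z_def by (simp add: sum_subtractf)
    have z2: "(\<Sum>j\<in>{a..a+m}. z j *\<^sub>R r j) = 0"
      using eq shift_combo[of d r a m] shift_combo[of c r a m] unfolding z_def
      by (simp add: scaleR_diff_left sum_subtractf)
    have "z (a + i) = 0" using zero[OF z1 z2] i by simp
    then show "d i = c i" unfolding z_def by simp
  qed
  have inj: "inj_on r {a..a+m}"
  proof (rule inj_onI, rule ccontr)
    fix i j assume ij: "i \<in> {a..a+m}" "j \<in> {a..a+m}" "r i = r j" "i \<noteq> j"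
    define z where "z l = (if l = i then 1 else if l = j then -1 else (0::real))" for l
    have fin: "finite {a..a+m}" by simp
    have "(\<Sum>l\<in>{a..a+m}. z l) = z i + (\<Sum>l\<in>{a..a+m} - {i}. z l)"
      using ij by (simp add: sum.remove[OF fin])
    also have "(\<Sum>l\<in>{a..a+m} - {i}. z l) = z j + (\<Sum>l\<in>{a..a+m} - {i} - {j}. z l)"
      using ij by (intro sum.remove) auto
    also have "(\<Sum>l\<in>{a..a+m} - {i} - {j}. z l) = 0" by (rule sum.neutral) (auto simp: z_def)
    finally have z1: "(\<Sum>l\<in>{a..a+m}. z l) = 0" using ij by (simp add: z_def)
    have "(\<Sum>l\<in>{a..a+m}. z l *\<^sub>R r l) = z i *\<^sub>R r i + (\<Sum>l\<in>{a..a+m} - {i}. z l *\<^sub>R r l)"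
      using ij by (simp add: sum.remove[OF fin])
    also have "(\<Sum>l\<in>{a..a+m} - {i}. z l *\<^sub>R r l) = z j *\<^sub>R r j + (\<Sum>l\<in>{a..a+m} - {i} - {j}. z l *\<^sub>R r l)"
      using ij by (intro sum.remove) auto
    also have "(\<Sum>l\<in>{a..a+m} - {i} - {j}. z l *\<^sub>R r l) = 0" by (rule sum.neutral) (auto simp: z_def)
    finally have z2: "(\<Sum>l\<in>{a..a+m}. z l *\<^sub>R r l) = 0" using ij by (simp add: z_def)
    have "z i = 0" using zero[OF z1 z2] ij by simp
    then show False by (simp add: z_def)
  qed
  have nad: "\<not> affine_dependent (r ` {a..a+m})"
  proof
    assume "affine_dependent (r ` {a..a+m})"
    then obtain U where U: "sum U (r ` {a..a+m}) = 0" "\<exists>v\<in>r ` {a..a+m}. U v \<noteq> 0"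
      "(\<Sum>v\<in>r ` {a..a+m}. U v *\<^sub>R v) = 0"
      using affine_dependent_explicit_finite[of "r ` {a..a+m}"] by auto
    have z1: "(\<Sum>j\<in>{a..a+m}. U (r j)) = 0" using U(1) sum.reindex[OF inj, of U] by simp
    have z2: "(\<Sum>j\<in>{a..a+m}. U (r j) *\<^sub>R r j) = 0"
      using U(3) sum.reindex[OF inj, of "\<lambda>v. U v *\<^sub>R v"] by simp
    show False using zero[OF z1 z2] U(2) by auto
  qed
  have "card (r ` {a..a+m}) = m + 1" using card_image[OF inj] by simp
  then show "m \<le> DIM('a)" using affine_dependent_biggerset[of "r ` {a..a+m}"] nad by fastforce
qed


lemma smooth_on_differentiable:
  assumes "smooth_on S h" "x \<in> S"
  shows "h differentiable (at x)"
proof -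
  have "C_k_on 1 S h" using assms(1) unfolding smooth_on_def by blast
  then have "(\<forall>vs. length vs < 1 \<longrightarrow> (\<forall>x\<in>S. iter_dd h vs differentiable (at x)))"
    unfolding C_k_on_def by blast
  then have "\<forall>x\<in>S. iter_dd h [] differentiable (at x)" by (metis list.size(3) zero_less_one)
  then show ?thesis using assms(2) by simp
qed

lemma C2_differentiable:
  assumes "C_k_on 2 S h" "x \<in> S"
  shows "h differentiable (at x)"
proof -
  have "(\<forall>vs. length vs < 2 \<longrightarrow> (\<forall>x\<in>S. iter_dd h vs differentiable (at x)))"
    using assms(1) unfolding C_k_on_def by blast
  then have "\<forall>x\<in>S. iter_dd h [] differentiable (at x)" by (metis list.size(3) zero_less_numeral)
  then show ?thesis using assms(2) by simp
qed

lemma in_subspace_by_orth: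
  fixes T0 :: "'a::euclidean_space set"
  assumes "subspace T0" "\<And>z. (\<And>y. y \<in> T0 \<Longrightarrow> z \<bullet> y = 0) \<Longrightarrow> z \<bullet> x = 0"
  shows "x \<in> T0"
proof -
  obtain y z where yz: "y \<in> span T0" "\<And>w. w \<in> span T0 \<Longrightarrow> orthogonal z w" "x = y + z"
    using orthogonal_subspace_decomp_exists by blast
  have sp: "span T0 = T0" using assms(1) by (simp add: span_eq_iff)
  have "z \<bullet> x = 0" using yz(2) sp by (intro assms(2)) (auto simp: orthogonal_def)
  moreover have "z \<bullet> y = 0" using yz(1,2) by (simp add: orthogonal_def)
  ultimately have "z \<bullet> z = 0" using yz(3) by (simp add: inner_add_right)
  then have "z = 0" by simp
  then have "x = y" using yz(3) by simp
  then show ?thesis using yz(1) sp by blast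
qed

lemma tangent_space_subspace:
  fixes \<Sigma> :: "'a::euclidean_space set"
  assumes "is_smooth_submanifold \<Sigma>" "xs \<in> \<Sigma>"
  shows "subspace (tangent_space \<Sigma> xs)"
proof -
  obtain W and \<phi> :: "'a \<Rightarrow> 'a" and \<psi> T0 where ch: "open W" "xs \<in> W" "open (\<phi> ` W)" "smooth_on W \<phi>" "smooth_on (\<phi> ` W) \<psi>"
      "\<forall>x\<in>W. \<psi> (\<phi> x) = x" "subspace T0" "\<phi> ` (W \<inter> \<Sigma>) = \<phi> ` W \<inter> T0"
    using bspec[OF assms(1)[unfolded is_smooth_submanifold_def] assms(2)] by blast
  define D\<phi> where "D\<phi> = frechet_derivative \<phi> (at xs)"
  define D\<psi> where "D\<psi> = frechet_derivative \<psi> (at (\<phi> xs))"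
  have d\<phi>: "(\<phi> has_derivative D\<phi>) (at xs)"
    unfolding D\<phi>_def using smooth_on_differentiable[OF ch(4,2)] frechet_derivative_works by blast
  have d\<psi>: "(\<psi> has_derivative D\<psi>) (at (\<phi> xs))"
    unfolding D\<psi>_def using smooth_on_differentiable[OF ch(5)] ch(2) frechet_derivative_works by blast
  have lin: "linear D\<psi>" using d\<psi> has_derivative_linear by blast
  have \<phi>xsT: "\<phi> xs \<in> T0" using ch(8) ch(2) assms(2) by blast
  have comp: "((\<psi> \<circ> \<phi>) has_derivative (D\<psi> \<circ> D\<phi>)) (at xs)"
    by (rule diff_chain_at[OF d\<phi> d\<psi>])
  have idd: "((\<psi> \<circ> \<phi>) has_derivative (\<lambda>x. x)) (at xs)"
    by (rule has_derivative_transform_within_open[OF has_derivative_ident ch(1,2)]) (use ch(6) in auto)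
  have inv: "D\<psi> (D\<phi> v) = v" for v
    using has_derivative_unique[OF comp idd] by (metis comp_apply)
  have "tangent_space \<Sigma> xs = D\<psi> ` T0"
  proof
    show "tangent_space \<Sigma> xs \<subseteq> D\<psi> ` T0"
    proof
      fix v assume "v \<in> tangent_space \<Sigma> xs"
      then obtain \<gamma> e where g: "\<gamma> 0 = xs" "e > 0" "\<forall>t. \<bar>t\<bar> < e \<longrightarrow> \<gamma> t \<in> \<Sigma>"
        "(\<gamma> has_vector_derivative v) (at 0)"
        unfolding tangent_space_def by blast
      have cd: "((\<phi> \<circ> \<gamma>) has_vector_derivative D\<phi> v) (at 0)"
        using vector_derivative_diff_chain_within[of \<gamma> v 0 UNIV \<phi> D\<phi>] g(4) d\<phi> g(1)
        by (simp add: has_derivative_at_withinI)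
      have cont: "isCont \<gamma> 0" using g(4) by (rule has_vector_derivative_continuous)
      have evW: "eventually (\<lambda>t. \<gamma> t \<in> W) (at 0)"
        using cont ch(1,2) g(1) unfolding isCont_def
        using topological_tendstoD by fastforce
      have eve: "eventually (\<lambda>t. \<bar>t\<bar> < e) (at (0::real))"
        using g(2) eventually_at[of "\<lambda>t. \<bar>t\<bar> < e" 0 UNIV] by (auto simp: dist_real_def)
      have evT: "eventually (\<lambda>t. \<phi> (\<gamma> t) \<in> T0) (at 0)"
        using evW eve
      proof eventually_elim
        case (elim t)
        then have "\<gamma> t \<in> W \<inter> \<Sigma>" using g(3) by auto
        then show ?case using ch(8) by blast
      qed
      have "D\<phi> v \<in> T0"
      proof (rule in_subspace_by_orth[OF ch(7)])
        fix z assume zo: "\<And>y. y \<in> T0 \<Longrightarrow> z \<bullet> y = 0"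
        have h1: "((\<lambda>t. z \<bullet> (\<phi> \<circ> \<gamma>) t) has_vector_derivative z \<bullet> D\<phi> v) (at 0)"
          by (rule bounded_linear.has_vector_derivative[OF bounded_linear_inner_right cd])
        have ev0: "eventually (\<lambda>t. t \<in> UNIV \<longrightarrow> z \<bullet> (\<phi> \<circ> \<gamma>) t = 0) (nhds 0)"
          unfolding eventually_nhds_conv_at using evT zo \<phi>xsT g(1)
          by (auto elim!: eventually_mono)
        have h2: "((\<lambda>t. z \<bullet> (\<phi> \<circ> \<gamma>) t) has_vector_derivative 0) (at 0)"
          by (subst has_vector_derivative_cong_ev[OF ev0]) (use zo \<phi>xsT g(1) in auto)
        show "z \<bullet> D\<phi> v = 0" using vector_derivative_unique_at[OF h1 h2] .
      qed
      then show "v \<in> D\<psi> ` T0" using inv[of v] by (metis image_eqI)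
    qed
    show "D\<psi> ` T0 \<subseteq> tangent_space \<Sigma> xs"
    proof
      fix v assume "v \<in> D\<psi> ` T0"
      then obtain w where w: "w \<in> T0" "v = D\<psi> w" by blast
      obtain rr where rr: "rr > 0" "ball (\<phi> xs) rr \<subseteq> \<phi> ` W"
        using ch(3) ch(2) openE by blast
      define e where "e = rr / (norm w + 1)"
      have nw: "0 < norm w + 1" by (smt (verit) norm_ge_zero)
      have e0: "e > 0" unfolding e_def using rr nw by simp
      define \<gamma> where "\<gamma> t = \<psi> (\<phi> xs + t *\<^sub>R w)" for t
      have "\<gamma> 0 = xs" unfolding \<gamma>_def using ch(6) ch(2) by simp
      moreover have "\<forall>t. \<bar>t\<bar> < e \<longrightarrow> \<gamma> t \<in> \<Sigma>"
      proof (intro allI impI)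
        fix t :: real assume t: "\<bar>t\<bar> < e"
        have "norm (t *\<^sub>R w) < rr"
        proof -
          have "norm (t *\<^sub>R w) = \<bar>t\<bar> * norm w" by simp
          also have "\<dots> \<le> \<bar>t\<bar> * (norm w + 1)" by (simp add: mult_left_mono)
          also have "\<dots> < e * (norm w + 1)" using t nw by (intro mult_strict_right_mono) auto
          also have "\<dots> = rr" unfolding e_def using nw by simp
          finally show ?thesis .
        qed
        then have "\<phi> xs + t *\<^sub>R w \<in> \<phi> ` W" using rr(2) by (auto simp: dist_norm)
        moreover have "\<phi> xs + t *\<^sub>R w \<in> T0"
          using \<phi>xsT w(1) ch(7) by (simp add: subspace_add subspace_scale)
        ultimately have "\<phi> xs + t *\<^sub>R w \<in> \<phi> ` (W \<inter> \<Sigma>)" using ch(8) by blast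
        then obtain y where y: "y \<in> W \<inter> \<Sigma>" "\<phi> xs + t *\<^sub>R w = \<phi> y" by blast
        then show "\<gamma> t \<in> \<Sigma>" unfolding \<gamma>_def using ch(6) by auto
      qed
      moreover have "(\<gamma> has_vector_derivative v) (at 0)"
      proof -
        have l: "((\<lambda>t. \<phi> xs + t *\<^sub>R w) has_vector_derivative w) (at 0)"
          by (auto intro!: derivative_eq_intros)
        have "((\<psi> \<circ> (\<lambda>t. \<phi> xs + t *\<^sub>R w)) has_vector_derivative D\<psi> w) (at 0)"
          using vector_derivative_diff_chain_within[OF l, of \<psi> D\<psi>] d\<psi>
          by (simp add: has_derivative_at_withinI)
        then show ?thesis unfolding \<gamma>_def w(2) by (simp add: o_def)
      qed
      ultimately show "v \<in> tangent_space \<Sigma> xs" unfolding tangent_space_def using e0 by blast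
    qed
  qed
  then show ?thesis using linear_subspace_image[OF lin ch(7)] by simp
qed


lemma wsum_bound:
  fixes v :: "nat \<Rightarrow> 'a::real_normed_vector"
  assumes "\<forall>j\<in>J. norm (v j) \<le> D" "(\<Sum>j\<in>J. \<bar>e j\<bar>) \<le> S" "0 \<le> D"
  shows "norm (\<Sum>j\<in>J. e j *\<^sub>R v j) \<le> S * D"
proof -
  have "norm (\<Sum>j\<in>J. e j *\<^sub>R v j) \<le> (\<Sum>j\<in>J. norm (e j *\<^sub>R v j))" by (rule norm_sum)
  also have "\<dots> \<le> (\<Sum>j\<in>J. \<bar>e j\<bar> * D)"
    using assms(1) by (intro sum_mono) (simp add: mult_left_mono)
  also have "\<dots> = (\<Sum>j\<in>J. \<bar>e j\<bar>) * D" by (simp add: sum_distrib_right)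
  also have "\<dots> \<le> S * D" using assms(2,3) by (simp add: mult_right_mono)
  finally show ?thesis .
qed

lemma affine_sum_diff:
  fixes v :: "nat \<Rightarrow> 'a::real_vector"
  assumes "(\<Sum>j\<in>J. e j) = 1"
  shows "(\<Sum>j\<in>J. e j *\<^sub>R v j) - p = (\<Sum>j\<in>J. e j *\<^sub>R (v j - p))"
proof -
  have "(\<Sum>j\<in>J. e j *\<^sub>R (v j - p)) = (\<Sum>j\<in>J. e j *\<^sub>R v j) - (\<Sum>j\<in>J. e j) *\<^sub>R p"
    by (simp add: scaleR_diff_right sum_subtractf scaleR_sum_left)
  then show ?thesis using assms by simp
qed

lemma S_ge1:
  assumes "(\<Sum>j\<in>J. e j) = (1::real)" "(\<Sum>j\<in>J. \<bar>e j\<bar>) \<le> S"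
  shows "1 \<le> S"
proof -
  have "1 = \<bar>\<Sum>j\<in>J. e j\<bar>" using assms by simp
  also have "\<dots> \<le> (\<Sum>j\<in>J. \<bar>e j\<bar>)" by (rule sum_abs)
  finally show ?thesis using assms(2) by simp
qed

locale prob =
  fixes Sg :: "(real^'n) set" and V :: "(real^'n) set" and f :: "real^'n \<Rightarrow> real^'p"
    and g :: "real^'n \<Rightarrow> real^'n" and xs :: "real^'n" and K \<sigma> :: real and U :: "(real^'n) set"
    and L L' M \<rho>0 :: real
  assumes fdiff: "f differentiable (at xs)"
    and gdiff: "g differentiable (at xs)"
    and gV: "g ` V \<subseteq> Sg"
    and K0: "0 < K"
    and as1: "\<forall>x \<in> V \<inter> g -` V \<inter> Sg. norm (f (g x)) \<le> K * norm (f x)"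
    and sig: "0 < \<sigma>"
    and as2: "\<forall>x \<in> V \<inter> Sg. \<sigma> * norm (x - xs) \<le> norm (f x)"
    and UV: "U \<subseteq> V \<inter> g -` V"
    and lip: "\<forall>x\<in>U. \<forall>y\<in>U.
        norm (f x - f y) \<le> 2 * onorm (frechet_derivative f (at xs)) * norm (x - y) \<and>
        norm (f (g x) - f (g y)) \<le>
          2 * onorm (frechet_derivative f (at xs) \<circ> frechet_derivative g (at xs)) * norm (x - y)"
    and LL: "0 < L" "0 < L'" "0 < M"
    and tay: "\<forall>x\<in>U. norm (f x - frechet_derivative f (at xs) (x - xs)) \<le> L / 2 * norm (x - xs)^2 \<and>
             norm (g x - xs - frechet_derivative g (at xs) (x - xs)) \<le> L' / 2 * norm (x - xs)^2"
    and cpU: "\<forall>x\<in>U. (\<exists>!y. y \<in> Sg \<and> (\<forall>z\<in>Sg. dist x y \<le> dist x z)) \<and> closest_point Sg x \<in> U"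
    and cpM: "\<forall>x\<in>U. norm (closest_point Sg x - (xs + closest_point (tangent_space Sg xs) (x - xs)))
               \<le> M / 2 * norm (x - xs)^2"
    and Tsub: "subspace (tangent_space Sg xs)"
    and rho0: "0 < \<rho>0" "ball xs \<rho>0 \<subseteq> U"
begin

definition "A = frechet_derivative f (at xs)"
definition "B = frechet_derivative g (at xs)"
definition "NA = \<bar>onorm A\<bar>"
definition "NAB = \<bar>onorm (A \<circ> B)\<bar>"
definition "NB = \<bar>onorm B\<bar>"
definition "Q = K * L + 2 * NA * L' + 2 * K * NA * M + 2 * NAB * M"

lemma linA: "linear A" and linB: "linear B" and blB: "bounded_linear B"
  using fdiff gdiff unfolding A_def B_def
  by (auto dest!: frechet_derivative_works[THEN iffD1] has_derivative_bounded_linear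
           intro: bounded_linear.linear)

lemma Bbound: "norm (B h) \<le> NB * norm h"
proof -
  have "norm (B h) \<le> onorm B * norm h" by (rule onorm[OF blB])
  also have "\<dots> \<le> NB * norm h" unfolding NB_def by (simp add: mult_right_mono)
  finally show ?thesis .
qed

lemma lipf:
  assumes "x \<in> U" "y \<in> U" shows "norm (f x - f y) \<le> 2 * NA * norm (x - y)"
proof -
  have "norm (f x - f y) \<le> 2 * onorm (frechet_derivative f (at xs)) * norm (x - y)" using lip assms by blast
  then have "norm (f x - f y) \<le> 2 * onorm A * norm (x - y)" by (simp add: A_def)
  also have "\<dots> \<le> 2 * NA * norm (x - y)" unfolding NA_def by (intro mult_right_mono) auto
  finally show ?thesis .
qed

lemma lipfg:
  assumes "x \<in> U" "y \<in> U" shows "norm (f (g x) - f (g y)) \<le> 2 * NAB * norm (x - y)"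
proof -
  have "norm (f (g x) - f (g y)) \<le> 2 * onorm (frechet_derivative f (at xs) \<circ> frechet_derivative g (at xs)) * norm (x - y)"
    using lip assms by blast
  then have "norm (f (g x) - f (g y)) \<le> 2 * onorm (A \<circ> B) * norm (x - y)" by (simp add: A_def B_def)
  also have "\<dots> \<le> 2 * NAB * norm (x - y)" unfolding NAB_def by (intro mult_right_mono) auto
  finally show ?thesis .
qed

lemma NA0: "0 \<le> NA" and NAB0: "0 \<le> NAB" and NB0: "0 \<le> NB"
  unfolding NA_def NAB_def NB_def by auto

lemma in_ball_U: "norm (p - xs) < \<rho>0 \<Longrightarrow> p \<in> U"
  using rho0(2) by (auto simp: dist_norm norm_minus_commute)

lemma cp_in: "p \<in> U \<Longrightarrow> closest_point Sg p \<in> Sg"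
proof -
  assume p: "p \<in> U"
  then obtain y where "y \<in> Sg" "\<forall>z\<in>Sg. dist p y \<le> dist p z" using cpU by blast
  then have "\<exists>y. y \<in> Sg \<and> (\<forall>z\<in>Sg. dist p y \<le> dist p z)" by blast
  from someI_ex[OF this] show ?thesis unfolding closest_point_def by blast
qed

end


context prob begin

lemma lin_combo:
  assumes "linear h"
  shows "h (\<Sum>j\<in>J. e j *\<^sub>R v j) = (\<Sum>j\<in>J. e j *\<^sub>R h (v j))"
  by (simp add: real_vector.linear_sum[OF assms] linear_cmul[OF assms])

lemma sq_aux:
  assumes "1 \<le> S" "0 \<le> (\<Delta>::real)"
  shows "S * \<Delta>^2 \<le> (S * \<Delta>)^2"
proof -
  have "S * \<Delta>^2 \<le> (S * S) * \<Delta>^2" using assms by (intro mult_right_mono) (auto simp: mult_le_cancel_left1)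
  then show ?thesis by (simp add: power2_eq_square algebra_simps)
qed

lemma f_combo:
  fixes e :: "nat \<Rightarrow> real" and xx :: "nat \<Rightarrow> real^'n"
  assumes J: "finite J" and e1: "(\<Sum>j\<in>J. e j) = 1" and eS: "(\<Sum>j\<in>J. \<bar>e j\<bar>) \<le> S"
    and xin: "\<forall>j\<in>J. xx j \<in> U \<and> norm (xx j - xs) \<le> \<Delta>" and D0: "0 \<le> \<Delta>"
    and yU: "(\<Sum>j\<in>J. e j *\<^sub>R xx j) \<in> U" and ny: "norm ((\<Sum>j\<in>J. e j *\<^sub>R xx j) - xs) \<le> S * \<Delta>"
  shows "norm (f (\<Sum>j\<in>J. e j *\<^sub>R xx j) - (\<Sum>j\<in>J. e j *\<^sub>R f (xx j))) \<le> L * (S * \<Delta>)^2"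
proof -
  define y where "y = (\<Sum>j\<in>J. e j *\<^sub>R xx j)"
  have S1: "1 \<le> S" using S_ge1[OF e1 eS] .
  define E where "E j = f (xx j) - A (xx j - xs)" for j
  have yd: "y - xs = (\<Sum>j\<in>J. e j *\<^sub>R (xx j - xs))" unfolding y_def by (rule affine_sum_diff[OF e1])
  have Ay: "A (y - xs) = (\<Sum>j\<in>J. e j *\<^sub>R A (xx j - xs))" unfolding yd by (rule lin_combo[OF linA])
  have eq: "f y - (\<Sum>j\<in>J. e j *\<^sub>R f (xx j)) = (f y - A (y - xs)) - (\<Sum>j\<in>J. e j *\<^sub>R E j)"
    unfolding Ay E_def by (simp add: scaleR_diff_right sum_subtractf)
  have E: "\<forall>j\<in>J. norm (E j) \<le> L/2 * \<Delta>^2"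
  proof
    fix j assume j: "j \<in> J"
    have "norm (E j) \<le> L/2 * norm (xx j - xs)^2" using tay xin j unfolding E_def A_def by blast
    also have "\<dots> \<le> L/2 * \<Delta>^2" using xin j LL by (intro mult_left_mono power_mono) auto
    finally show "norm (E j) \<le> L/2 * \<Delta>^2" .
  qed
  have n1: "norm (f y - A (y - xs)) \<le> L/2 * (S * \<Delta>)^2"
  proof -
    have "norm (f y - A (y - xs)) \<le> L/2 * norm (y - xs)^2" using tay yU unfolding y_def A_def by blast
    also have "\<dots> \<le> L/2 * (S*\<Delta>)^2" using ny LL unfolding y_def by (intro mult_left_mono power_mono) auto
    finally show ?thesis .
  qed
  have n2: "norm (\<Sum>j\<in>J. e j *\<^sub>R E j) \<le> S * (L/2 * \<Delta>^2)"
    by (rule wsum_bound[OF E eS]) (use LL in auto)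
  have n3: "S * (L/2 * \<Delta>^2) \<le> L/2 * (S * \<Delta>)^2"
    using sq_aux[OF S1 D0] LL by (simp add: algebra_simps mult_left_mono)
  have "norm (f y - (\<Sum>j\<in>J. e j *\<^sub>R f (xx j))) \<le> norm (f y - A (y - xs)) + norm (\<Sum>j\<in>J. e j *\<^sub>R E j)"
    unfolding eq by (rule norm_triangle_ineq4)
  also have "\<dots> \<le> L * (S * \<Delta>)^2" using n1 n2 n3 by simp
  finally show ?thesis unfolding y_def .
qed

lemma stepP:
  fixes e :: "nat \<Rightarrow> real" and xx :: "nat \<Rightarrow> real^'n"
  assumes J: "finite J" and e1: "(\<Sum>j\<in>J. e j) = 1" and eS: "(\<Sum>j\<in>J. \<bar>e j\<bar>) \<le> S"
    and xin: "\<forall>j\<in>J. xx j \<in> Sg \<and> norm (xx j - xs) \<le> \<Delta>" and D0: "0 \<le> \<Delta>"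
    and small: "S * \<Delta> < \<rho>0"
  shows "(\<Sum>j\<in>J. e j *\<^sub>R xx j) \<in> U \<and> g (\<Sum>j\<in>J. e j *\<^sub>R xx j) \<in> V \<inter> Sg \<and>
         norm (f (g (\<Sum>j\<in>J. e j *\<^sub>R xx j))) \<le> K * norm (\<Sum>j\<in>J. e j *\<^sub>R f (xx j)) + Q * (S*\<Delta>)^2"
proof -
  define y where "y = (\<Sum>j\<in>J. e j *\<^sub>R xx j)"
  define X where "X = (S * \<Delta>)^2"
  define T where "T = tangent_space Sg xs"
  define P where "P = closest_point T"
  have S1: "1 \<le> S" using S_ge1[OF e1 eS] .
  have xU: "\<forall>j\<in>J. xx j \<in> U"
  proof
    fix j assume "j \<in> J"
    then have "norm (xx j - xs) \<le> S * \<Delta>" using xin S1 D0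
      by (meson dual_order.trans mult_le_cancel_right1 not_le)
    then show "xx j \<in> U" using small in_ball_U by simp
  qed
  have yd: "y - xs = (\<Sum>j\<in>J. e j *\<^sub>R (xx j - xs))" unfolding y_def by (rule affine_sum_diff[OF e1])
  have ny: "norm (y - xs) \<le> S * \<Delta>" unfolding yd by (rule wsum_bound[OF _ eS D0]) (use xin in auto)
  have yU: "y \<in> U" using ny small in_ball_U by simp
  have fy: "norm (f y - (\<Sum>j\<in>J. e j *\<^sub>R f (xx j))) \<le> L * X"
    unfolding y_def X_def by (rule f_combo[OF J e1 eS _ D0]) (use xin xU yU ny in \<open>auto simp: y_def\<close>)
  have Tc: "closed T" "T \<noteq> {}" using Tsub closed_subspace subspace_0 unfolding T_def by blast+
  have Pj: "\<forall>j\<in>J. norm ((xx j - xs) - P (xx j - xs)) \<le> M/2 * \<Delta>^2"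
  proof
    fix j assume j: "j \<in> J"
    have "norm (closest_point Sg (xx j) - (xs + P (xx j - xs))) \<le> M / 2 * norm (xx j - xs)^2"
      using cpM xU j unfolding P_def T_def by blast
    moreover have "closest_point Sg (xx j) = xx j" using xin j by (simp add: closest_point_self)
    ultimately have "norm ((xx j - xs) - P (xx j - xs)) \<le> M / 2 * norm (xx j - xs)^2"
      by (simp add: algebra_simps)
    also have "\<dots> \<le> M/2 * \<Delta>^2" using xin j LL by (intro mult_left_mono power_mono) auto
    finally show "norm ((xx j - xs) - P (xx j - xs)) \<le> M/2 * \<Delta>^2" .
  qed
  define \<tau> where "\<tau> = (\<Sum>j\<in>J. e j *\<^sub>R P (xx j - xs))"
  have \<tau>T: "\<tau> \<in> T" unfolding \<tau>_def P_def
    using Tsub closest_point_in_set[OF Tc] unfolding T_def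
    by (intro subspace_sum subspace_scale) auto
  have n\<tau>: "norm ((y - xs) - \<tau>) \<le> S * (M/2 * \<Delta>^2)"
  proof -
    have "(y - xs) - \<tau> = (\<Sum>j\<in>J. e j *\<^sub>R ((xx j - xs) - P (xx j - xs)))"
      unfolding yd \<tau>_def by (simp add: scaleR_diff_right sum_subtractf)
    then show ?thesis using wsum_bound[OF Pj eS] LL by simp
  qed
  have nP: "norm ((y - xs) - P (y - xs)) \<le> norm ((y - xs) - \<tau>)"
    using closest_point_le[OF Tc(1) \<tau>T, of "y - xs"] unfolding P_def by (simp add: dist_norm)
  define z where "z = closest_point Sg y"
  have zU: "z \<in> U" unfolding z_def using bspec[OF cpU yU] by (rule conjunct2)
  have zS: "z \<in> Sg" using cp_in[OF yU] unfolding z_def .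
  have nz: "norm (z - (xs + P (y - xs))) \<le> M/2 * X"
  proof -
    have "norm (z - (xs + P (y - xs))) \<le> M / 2 * norm (y - xs)^2"
      using cpM yU unfolding z_def P_def T_def by blast
    also have "\<dots> \<le> M/2 * X" unfolding X_def using ny LL by (intro mult_left_mono power_mono) auto
    finally show ?thesis .
  qed
  have SX: "S * (M/2 * \<Delta>^2) \<le> M/2 * X"
    unfolding X_def using sq_aux[OF S1 D0] LL by (simp add: algebra_simps mult_left_mono)
  have zy: "norm (z - y) \<le> M * X"
  proof -
    have "z - y = (z - (xs + P (y - xs))) - ((y - xs) - P (y - xs))" by (simp add: algebra_simps)
    then have "norm (z - y) \<le> norm (z - (xs + P (y - xs))) + norm ((y - xs) - P (y - xs))"
      using norm_triangle_ineq4[of "z - (xs + P (y - xs))" "(y - xs) - P (y - xs)"] by simp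
    then show ?thesis using nz nP n\<tau> SX by simp
  qed
  have zV: "z \<in> V \<inter> g -` V \<inter> Sg" using zU zS UV by blast
  have fgz: "norm (f (g z)) \<le> K * norm (f z)" using as1 zV by blast
  have fgy: "norm (f (g y)) \<le> norm (f (g z)) + 2 * NAB * (M * X)"
  proof -
    have "norm (f (g y) - f (g z)) \<le> 2 * NAB * norm (y - z)" by (rule lipfg[OF yU zU])
    also have "\<dots> \<le> 2 * NAB * (M * X)" using zy NAB0 by (simp add: norm_minus_commute mult_left_mono)
    finally show ?thesis using norm_triangle_ineq2[of "f (g y)" "f (g z)"] by linarith
  qed
  have fz: "norm (f z) \<le> norm (f y) + 2 * NA * (M * X)"
  proof -
    have "norm (f z - f y) \<le> 2 * NA * norm (z - y)" by (rule lipf[OF zU yU])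
    also have "\<dots> \<le> 2 * NA * (M * X)" using zy NA0 by (simp add: mult_left_mono)
    finally show ?thesis using norm_triangle_ineq2[of "f z" "f y"] by linarith
  qed
  have fy2: "norm (f y) \<le> norm (\<Sum>j\<in>J. e j *\<^sub>R f (xx j)) + L * X"
    using fy norm_triangle_ineq2[of "f y" "\<Sum>j\<in>J. e j *\<^sub>R f (xx j)"] by linarith
  have X0: "0 \<le> X" unfolding X_def by simp
  have "norm (f (g y)) \<le> K * (norm (\<Sum>j\<in>J. e j *\<^sub>R f (xx j)) + L * X + 2 * NA * (M * X)) + 2 * NAB * (M * X)"
  proof -
    have "K * norm (f z) \<le> K * (norm (\<Sum>j\<in>J. e j *\<^sub>R f (xx j)) + L * X + 2 * NA * (M * X))"
      using fz fy2 K0 by (intro mult_left_mono) auto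
    then show ?thesis using fgy fgz by linarith
  qed
  also have "\<dots> \<le> K * norm (\<Sum>j\<in>J. e j *\<^sub>R f (xx j)) + Q * X"
  proof -
    have "0 \<le> 2 * NA * L' * X" using NA0 LL X0 by simp
    then show ?thesis unfolding Q_def by (simp add: algebra_simps)
  qed
  finally have fin: "norm (f (g y)) \<le> K * norm (\<Sum>j\<in>J. e j *\<^sub>R f (xx j)) + Q * X" .
  have gyV: "g y \<in> V" using yU UV by blast
  have yV0: "y \<in> V" using yU UV by (meson IntD1 subsetD)
  have gyS: "g y \<in> Sg" using gV imageI[OF yV0, of g] by (rule subsetD)
  have gyVS: "g y \<in> V \<inter> Sg" using gyV gyS by (rule IntI)
  have "y \<in> U \<and> g y \<in> V \<inter> Sg \<and> norm (f (g y)) \<le> K * norm (\<Sum>j\<in>J. e j *\<^sub>R f (xx j)) + Q * X"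
    using yU gyVS fin by (intro conjI)
  then show ?thesis unfolding y_def X_def .
qed

lemma stepA:
  fixes e :: "nat \<Rightarrow> real" and xx :: "nat \<Rightarrow> real^'n"
  assumes SgU: "Sg = UNIV" and J: "finite J" and e1: "(\<Sum>j\<in>J. e j) = 1" and eS: "(\<Sum>j\<in>J. \<bar>e j\<bar>) \<le> S"
    and xin: "\<forall>j\<in>J. norm (xx j - xs) \<le> \<Delta>" and D0: "0 \<le> \<Delta>"
    and small1: "S * \<Delta> \<le> 1" and small: "(NB + 2 * L' + 1) * (S * \<Delta>) < \<rho>0"
  shows "(\<Sum>j\<in>J. e j *\<^sub>R g (xx j)) \<in> V \<and>
         norm (f (\<Sum>j\<in>J. e j *\<^sub>R g (xx j))) \<le> K * norm (\<Sum>j\<in>J. e j *\<^sub>R f (xx j)) + Q * (S*\<Delta>)^2"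
proof -
  define y where "y = (\<Sum>j\<in>J. e j *\<^sub>R xx j)"
  define w where "w = (\<Sum>j\<in>J. e j *\<^sub>R g (xx j))"
  define X where "X = (S * \<Delta>)^2"
  have S1: "1 \<le> S" using S_ge1[OF e1 eS] .
  have SD0: "0 \<le> S * \<Delta>" using S1 D0 by simp
  have X0: "0 \<le> X" unfolding X_def by simp
  have XSD: "X \<le> S * \<Delta>" unfolding X_def power2_eq_square using small1 SD0 by (simp add: mult_left_le)
  have ltr: "S * \<Delta> < \<rho>0"
  proof -
    have "S * \<Delta> \<le> (NB + 2 * L' + 1) * (S * \<Delta>)" using NB0 LL SD0 by (simp add: mult_le_cancel_right1)
    then show ?thesis using small by simp
  qed
  have xU: "\<forall>j\<in>J. xx j \<in> U"
  proof
    fix j assume "j \<in> J"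
    then have "norm (xx j - xs) \<le> S * \<Delta>" using xin S1 D0
      by (meson dual_order.trans mult_le_cancel_right1 not_le)
    then show "xx j \<in> U" using ltr in_ball_U by simp
  qed
  have yd: "y - xs = (\<Sum>j\<in>J. e j *\<^sub>R (xx j - xs))" unfolding y_def by (rule affine_sum_diff[OF e1])
  have ny: "norm (y - xs) \<le> S * \<Delta>" unfolding yd by (rule wsum_bound[OF _ eS D0]) (use xin in auto)
  have yU: "y \<in> U" using ny ltr in_ball_U by simp
  have fy: "norm (f y - (\<Sum>j\<in>J. e j *\<^sub>R f (xx j))) \<le> L * X"
    unfolding y_def X_def by (rule f_combo[OF J e1 eS _ D0]) (use xin xU yU ny in \<open>auto simp: y_def\<close>)
  define E where "E j = g (xx j) - xs - B (xx j - xs)" for j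
  have E: "\<forall>j\<in>J. norm (E j) \<le> L'/2 * \<Delta>^2"
  proof
    fix j assume j: "j \<in> J"
    have "norm (E j) \<le> L'/2 * norm (xx j - xs)^2" using tay xU j unfolding E_def B_def by blast
    also have "\<dots> \<le> L'/2 * \<Delta>^2" using xin j LL by (intro mult_left_mono power_mono) auto
    finally show "norm (E j) \<le> L'/2 * \<Delta>^2" .
  qed
  define Ey where "Ey = g y - xs - B (y - xs)"
  have nEy: "norm Ey \<le> L'/2 * X"
  proof -
    have "norm Ey \<le> L'/2 * norm (y - xs)^2" using tay yU unfolding Ey_def B_def by blast
    also have "\<dots> \<le> L'/2 * X" unfolding X_def using ny LL by (intro mult_left_mono power_mono) auto
    finally show ?thesis .
  qed
  have wd: "w - xs = (\<Sum>j\<in>J. e j *\<^sub>R (g (xx j) - xs))" unfolding w_def by (rule affine_sum_diff[OF e1])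
  have By: "B (y - xs) = (\<Sum>j\<in>J. e j *\<^sub>R B (xx j - xs))" unfolding yd by (rule lin_combo[OF linB])
  have wgy: "w - g y = (\<Sum>j\<in>J. e j *\<^sub>R E j) - Ey"
  proof -
    have "w - g y = (w - xs) - (g y - xs)" by simp
    also have "\<dots> = (\<Sum>j\<in>J. e j *\<^sub>R (g (xx j) - xs)) - (B (y - xs) + Ey)" unfolding wd Ey_def by simp
    also have "\<dots> = (\<Sum>j\<in>J. e j *\<^sub>R E j) - Ey"
      unfolding By E_def by (simp add: scaleR_diff_right sum_subtractf sum.distrib algebra_simps)
    finally show ?thesis .
  qed
  have nE: "norm (\<Sum>j\<in>J. e j *\<^sub>R E j) \<le> S * (L'/2 * \<Delta>^2)"
    by (rule wsum_bound[OF E eS]) (use LL in auto)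
  have SX: "S * (L'/2 * \<Delta>^2) \<le> L'/2 * X"
    unfolding X_def using sq_aux[OF S1 D0] LL by (simp add: algebra_simps mult_left_mono)
  have nwgy: "norm (w - g y) \<le> L' * X"
  proof -
    have "norm (w - g y) \<le> norm (\<Sum>j\<in>J. e j *\<^sub>R E j) + norm Ey" unfolding wgy by (rule norm_triangle_ineq4)
    then show ?thesis using nE SX nEy by simp
  qed
  have ngy: "norm (g y - xs) \<le> NB * (S * \<Delta>) + L'/2 * X"
  proof -
    have "g y - xs = B (y - xs) + Ey" unfolding Ey_def by simp
    then have "norm (g y - xs) \<le> norm (B (y - xs)) + norm Ey" using norm_triangle_ineq[of "B (y - xs)" Ey] by simp
    also have "norm (B (y - xs)) \<le> NB * (S * \<Delta>)"
      using Bbound[of "y - xs"] ny NB0 by (meson mult_left_mono order_trans)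
    finally show ?thesis using nEy by simp
  qed
  have gyU: "g y \<in> U"
  proof -
    have "L'/2 * X \<le> L' * (S * \<Delta>)" using XSD LL X0 by (simp add: mult_left_mono)
    then have "norm (g y - xs) \<le> NB * (S * \<Delta>) + L' * (S * \<Delta>)" using ngy by linarith
    also have "\<dots> \<le> (NB + 2 * L' + 1) * (S * \<Delta>)" using SD0 LL by (simp add: algebra_simps)
    finally have "norm (g y - xs) \<le> (NB + 2 * L' + 1) * (S * \<Delta>)" .
    then show ?thesis using small in_ball_U by simp
  qed
  have wU: "w \<in> U"
  proof -
    have "norm (w - xs) \<le> norm (w - g y) + norm (g y - xs)"
      using norm_triangle_ineq[of "w - g y" "g y - xs"] by simp
    also have "\<dots> \<le> L' * X + NB * (S * \<Delta>) + L'/2 * X" using nwgy ngy by simp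
    also have "\<dots> \<le> (NB + 2 * L' + 1) * (S * \<Delta>)"
    proof -
      have "L' * X \<le> L' * (S * \<Delta>)" "L'/2 * X \<le> L' * (S * \<Delta>)" using XSD LL X0 by (simp_all add: mult_left_mono)
      moreover have "(NB + 2*L' + 1)*(S*\<Delta>) = NB*(S*\<Delta>) + 2*(L'*(S*\<Delta>)) + S*\<Delta>" by (simp add: algebra_simps)
      ultimately show ?thesis using SD0 by linarith
    qed
    finally show ?thesis using small in_ball_U by simp
  qed
  have yV: "y \<in> V \<inter> g -` V \<inter> Sg" using yU UV SgU by blast
  have fgy: "norm (f (g y)) \<le> K * norm (f y)" using as1 yV by blast
  have fw: "norm (f w) \<le> norm (f (g y)) + 2 * NA * (L' * X)"
  proof -
    have "norm (f w - f (g y)) \<le> 2 * NA * norm (w - g y)" by (rule lipf[OF wU gyU])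
    also have "\<dots> \<le> 2 * NA * (L' * X)" using nwgy NA0 by (simp add: mult_left_mono)
    finally show ?thesis using norm_triangle_ineq2[of "f w" "f (g y)"] by linarith
  qed
  have fy2: "norm (f y) \<le> norm (\<Sum>j\<in>J. e j *\<^sub>R f (xx j)) + L * X"
    using fy norm_triangle_ineq2[of "f y" "\<Sum>j\<in>J. e j *\<^sub>R f (xx j)"] by linarith
  have "norm (f w) \<le> K * (norm (\<Sum>j\<in>J. e j *\<^sub>R f (xx j)) + L * X) + 2 * NA * (L' * X)"
  proof -
    have "K * norm (f y) \<le> K * (norm (\<Sum>j\<in>J. e j *\<^sub>R f (xx j)) + L * X)"
      using fy2 K0 by (intro mult_left_mono) auto
    then show ?thesis using fw fgy by linarith
  qed
  also have "\<dots> \<le> K * norm (\<Sum>j\<in>J. e j *\<^sub>R f (xx j)) + Q * X"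
  proof -
    have "0 \<le> 2 * K * NA * M * X" using NA0 LL X0 K0 by simp
    moreover have "0 \<le> 2 * NAB * M * X" using NAB0 LL X0 by simp
    ultimately show ?thesis unfolding Q_def by (simp add: algebra_simps)
  qed
  finally have fin: "norm (f w) \<le> K * norm (\<Sum>j\<in>J. e j *\<^sub>R f (xx j)) + Q * X" .
  have wV: "w \<in> V" using wU UV by (meson IntD1 subsetD)
  show ?thesis using wV fin unfolding w_def X_def by (rule conjI)
qed

end


definition Smax :: "real \<Rightarrow> nat \<Rightarrow> real" where "Smax \<mu> p = 4 * (3 / (1 - \<mu>)) ^ p"

locale run = prob Sg V f g xs K \<sigma> U L L' M \<rho>0
  for Sg :: "(real^'n) set" and V :: "(real^'n) set" and f :: "real^'n \<Rightarrow> real^'p"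
    and g :: "real^'n \<Rightarrow> real^'n" and xs :: "real^'n" and K \<sigma> :: real and U :: "(real^'n) set"
    and L L' M \<rho>0 :: real +
  fixes \<mu> \<delta> :: real and vP :: bool and x :: "nat \<Rightarrow> real^'n" and r :: "nat \<Rightarrow> real^'p"
    and m :: "nat \<Rightarrow> nat" and c :: "nat \<Rightarrow> nat \<Rightarrow> real" and c\<mu> :: real
  assumes mu: "K < \<mu>" "\<mu> < 1"
    and del: "0 < \<delta>" "\<delta> < K"
    and vPU: "vP \<or> Sg = UNIV"
    and x0: "x 0 \<in> U \<inter> Sg" and r0: "0 < norm (r 0)" "norm (r 0) \<le> c\<mu> * \<delta>^2"
    and runA: "AAP_run vP f g \<delta> x r m c"
    and cm: "0 < c\<mu>" "Smax \<mu> CARD('p) * c\<mu> / \<sigma> \<le> 1"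
      "(\<bar>onorm (frechet_derivative g (at xs))\<bar> + 2 * L' + 1) * (Smax \<mu> CARD('p) * c\<mu> / \<sigma>) < \<rho>0"
      "\<bar>K * L + 2 * \<bar>onorm (frechet_derivative f (at xs))\<bar> * L' + 2 * K * \<bar>onorm (frechet_derivative f (at xs))\<bar> * M
         + 2 * \<bar>onorm (frechet_derivative f (at xs) \<circ> frechet_derivative g (at xs))\<bar> * M\<bar>
         * (Smax \<mu> CARD('p))^2 * c\<mu> / \<sigma>^2 \<le> \<mu> - K"
begin

definition "Sm = Smax \<mu> CARD('p)"

lemma cm': "Sm * c\<mu> / \<sigma> \<le> 1" "(NB + 2 * L' + 1) * (Sm * c\<mu> / \<sigma>) < \<rho>0"
  "\<bar>Q\<bar> * Sm^2 * c\<mu> / \<sigma>^2 \<le> \<mu> - K"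
  using cm unfolding Sm_def NB_def B_def Q_def NA_def NAB_def A_def by auto

lemma R1: "r k = f (x k)" and R2: "m 0 = 0"
  using runA unfolding AAP_run_def by auto

lemma R3: "r k = 0 \<Longrightarrow> k \<le> j \<Longrightarrow> x j = x k \<and> r j = 0 \<and> m j = 0"
  using runA unfolding AAP_run_def by blast

lemma R4: "(\<forall>j\<le>k. r j \<noteq> 0) \<Longrightarrow>
        (if m k = 0 then c k 0 = 1 \<and> x (Suc k) = g (x k)
         else is_LS_min r k (m k) (c k) \<and>
              x (Suc k) = (if vP then g (\<Sum>i\<le>m k. c k i *\<^sub>R x (k - m k + i))
                           else (\<Sum>i\<le>m k. c k i *\<^sub>R g (x (k - m k + i))))) \<and>
        m (Suc k) = (GREATEST mm. mm \<le> m k + 1 \<and>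
                       (\<forall>i. Suc k - mm \<le> i \<and> i \<le> k \<longrightarrow> \<delta> * norm (r i) < norm (r (Suc k))))"
  using runA unfolding AAP_run_def by blast

lemma nz_before: "r k \<noteq> 0 \<Longrightarrow> j \<le> k \<Longrightarrow> r j \<noteq> 0"
  using R3 by blast

lemma GR:
  assumes nz: "\<forall>j\<le>k. r j \<noteq> 0"
  shows "m (Suc k) \<le> m k + 1"
    and "\<forall>i. Suc k - m (Suc k) \<le> i \<and> i \<le> k \<longrightarrow> \<delta> * norm (r i) < norm (r (Suc k))"
    and "m (Suc k) \<le> m k \<Longrightarrow> m (Suc k) \<le> k \<and> norm (r (Suc k)) \<le> \<delta> * norm (r (k - m (Suc k)))"
proof -
  define P where "P mm = (mm \<le> m k + 1 \<and>
                       (\<forall>i. Suc k - mm \<le> i \<and> i \<le> k \<longrightarrow> \<delta> * norm (r i) < norm (r (Suc k))))" for mm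
  have eq: "m (Suc k) = Greatest P" using R4[OF nz] unfolding P_def by simp
  have P0: "P 0" unfolding P_def by auto
  have bd: "\<And>y. P y \<Longrightarrow> y \<le> m k + 1" unfolding P_def by auto
  have Pm: "P (m (Suc k))" unfolding eq by (rule GreatestI_nat[of P 0 "m k + 1", OF P0 bd])
  then show "m (Suc k) \<le> m k + 1"
    and 2: "\<forall>i. Suc k - m (Suc k) \<le> i \<and> i \<le> k \<longrightarrow> \<delta> * norm (r i) < norm (r (Suc k))"
    unfolding P_def by auto
  assume le: "m (Suc k) \<le> m k"
  have "\<not> P (m (Suc k) + 1)"
  proof
    assume "P (m (Suc k) + 1)"
    then have "m (Suc k) + 1 \<le> Greatest P" by (rule Greatest_le_nat[of P _ "m k + 1", OF _ bd])
    then show False unfolding eq[symmetric] by simp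
  qed
  then obtain i where i: "Suc k - (m (Suc k) + 1) \<le> i" "i \<le> k" "\<not> \<delta> * norm (r i) < norm (r (Suc k))"
    using le unfolding P_def by auto
  have "\<not> (Suc k - m (Suc k) \<le> i)" using 2 i by blast
  then have mk: "m (Suc k) \<le> k" and ieq: "i = k - m (Suc k)" using i(1) by auto
  show "m (Suc k) \<le> k \<and> norm (r (Suc k)) \<le> \<delta> * norm (r (k - m (Suc k)))"
    using mk i(3) ieq by simp
qed

lemma mle: "m k \<le> k"
proof (induction k)
  case 0 then show ?case using R2 by simp
next
  case (Suc k)
  show ?case
  proof (cases "\<forall>j\<le>k. r j \<noteq> 0")
    case True then show ?thesis using GR(1)[OF True] Suc by simp
  next
    case False
    then obtain j where "j \<le> k" "r j = 0" by auto
    then have "m (Suc k) = 0" using R3[of j "Suc k"] by simp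
    then show ?thesis by simp
  qed
qed

lemma mono_r:
  assumes "\<forall>j<n. norm (r (Suc j)) \<le> \<mu> * norm (r j)" "i \<le> j" "j \<le> n"
  shows "norm (r j) \<le> norm (r i)"
  using assms(2,3)
proof (induction j)
  case 0 then show ?case by simp
next
  case (Suc j)
  show ?case
  proof (cases "i = Suc j")
    case True then show ?thesis by simp
  next
    case False
    then have "i \<le> j" using Suc by simp
    then have "norm (r j) \<le> norm (r i)" using Suc by simp
    moreover have "norm (r (Suc j)) \<le> \<mu> * norm (r j)" using assms(1) Suc by simp
    moreover have "\<mu> * norm (r j) \<le> norm (r j)" using mu K0 by (intro mult_left_le_one_le) auto
    ultimately show ?thesis by linarith
  qed
qed

definition "HW k \<longleftrightarrow> (\<forall>j. k - m k < j \<and> j \<le> k \<longrightarrow>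
   (\<forall>h\<in>affine hull (r ` {k - m k..j - 1}). norm (r j) \<le> \<mu> * norm h))"

lemma LSk:
  assumes nz: "\<forall>j\<le>k. r j \<noteq> 0" and hw: "HW k" and mk: "0 < m k"
  shows "(\<Sum>i\<le>m k. \<bar>c k i\<bar>) \<le> 2 * (2*(3/(1-\<mu>))^(m k) - 1)"
    and "\<forall>d. is_LS_min r k (m k) d \<longrightarrow> (\<forall>i\<le>m k. d i = c k i)"
    and "m k \<le> CARD('p)"
proof -
  define a where "a = k - m k"
  have ka: "k = a + m k" unfolding a_def using mle[of k] by simp
  have LS: "is_LS_min r (a + m k) (m k) (c k)" using R4[OF nz] mk ka by (simp split: if_splits)
  have mu0: "0 \<le> \<mu>" "\<mu> < 1" using mu K0 by auto
  have nz': "\<forall>j\<le>m k. r (a+j) \<noteq> 0" using nz ka by simp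
  have H: "\<forall>j. 1 \<le> j \<longrightarrow> j \<le> m k \<longrightarrow> (\<forall>h\<in>affine hull (r ` {a..a+(j-1)}). norm (r (a+j)) \<le> \<mu> * norm h)"
  proof (intro allI impI)
    fix j assume j: "1 \<le> j" "j \<le> m k"
    have "k - m k < a + j \<and> a + j \<le> k" using j ka unfolding a_def by linarith
    moreover have "{k - m k..a + j - 1} = {a..a+(j-1)}" using j unfolding a_def by auto
    ultimately show "\<forall>h\<in>affine hull (r ` {a..a+(j-1)}). norm (r (a+j)) \<le> \<mu> * norm h"
      using hw unfolding HW_def by metis
  qed
  note W = LS_window[OF mu0 nz' H LS]
  show "(\<Sum>i\<le>m k. \<bar>c k i\<bar>) \<le> 2 * (2*(3/(1-\<mu>))^(m k) - 1)" using W(1) .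
  show "\<forall>d. is_LS_min r k (m k) d \<longrightarrow> (\<forall>i\<le>m k. d i = c k i)" using W(2) ka by simp
  show "m k \<le> CARD('p)" using W(3) by simp
qed

end


context run begin

lemma Sm_bound:
  assumes "mk \<le> CARD('p)"
  shows "2 * (2*(3/(1-\<mu>))^mk - 1) \<le> Sm"
proof -
  have q1: "1 \<le> 3/(1-\<mu>)" using mu K0 by (simp add: field_simps)
  have "(3/(1-\<mu>))^mk \<le> (3/(1-\<mu>))^CARD('p)" by (rule power_increasing[OF assms q1])
  then show ?thesis unfolding Sm_def Smax_def by simp
qed

lemma Sm1: "1 \<le> Sm"
proof -
  have "1 \<le> (3/(1-\<mu>))^CARD('p)" using mu K0 by (intro one_le_power) (simp add: field_simps)
  then show ?thesis unfolding Sm_def Smax_def by simp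
qed

lemma step:
  assumes nzk: "\<forall>j\<le>k. r j \<noteq> 0"
    and I1: "\<forall>j\<le>k. x j \<in> U \<inter> Sg \<and> norm (x j - xs) \<le> norm (r j) / \<sigma>"
    and I2: "\<forall>j<k. norm (r (Suc j)) \<le> \<mu> * norm (r j)"
    and hw: "HW k"
  shows "x (Suc k) \<in> V \<inter> Sg \<and> norm (r (Suc k)) \<le> \<mu> * norm (r k) \<and>
     (1 \<le> m (Suc k) \<longrightarrow> (\<forall>h\<in>affine hull (r ` {Suc k - m (Suc k)..k}). norm (r (Suc k)) \<le> \<mu> * norm h)) \<and>
     (vP \<and> 0 < m k \<longrightarrow> (\<Sum>i\<le>m k. c k i *\<^sub>R x (k - m k + i)) \<in> V)"
proof (cases "m k = 0")
  case True
  have xs1: "x (Suc k) = g (x k)" using R4[OF nzk] True by simp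
  have xkU: "x k \<in> U" "x k \<in> Sg" using I1 by auto
  have xkV: "x k \<in> V \<inter> g -` V \<inter> Sg" using xkU UV by blast
  have gV': "g (x k) \<in> V" using xkV by blast
  have gS: "g (x k) \<in> Sg" using gV imageI[OF _ , of "x k" V g] xkV by blast
  have c1: "norm (r (Suc k)) \<le> K * norm (r k)" using as1 xkV xs1 R1 by simp
  have c2: "norm (r (Suc k)) \<le> \<mu> * norm (r k)"
    using c1 mu by (smt (verit) mult_right_mono norm_ge_zero)
  have c3: "1 \<le> m (Suc k) \<longrightarrow> (\<forall>h\<in>affine hull (r ` {Suc k - m (Suc k)..k}). norm (r (Suc k)) \<le> \<mu> * norm h)"
  proof
    assume "1 \<le> m (Suc k)"
    then have "m (Suc k) = 1" using GR(1)[OF nzk] True by simp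
    then have "{Suc k - m (Suc k)..k} = {k}" by auto
    then show "\<forall>h\<in>affine hull (r ` {Suc k - m (Suc k)..k}). norm (r (Suc k)) \<le> \<mu> * norm h"
      using c2 by simp
  qed
  show ?thesis using xs1 gV' gS c2 c3 True by simp
next
  case False
  define a where "a = k - m k"
  define mk where "mk = m k"
  have ka: "k = a + mk" unfolding a_def mk_def using mle[of k] by simp
  have mk0: "0 < mk" using False unfolding mk_def by simp
  have LS: "is_LS_min r k mk (c k)" using R4[OF nzk] False unfolding mk_def by (simp split: if_splits)
  have LS': "is_LS_min r (a + mk) mk (c k)" using LS ka by simp
  have xs1: "x (Suc k) = (if vP then g (\<Sum>i\<le>mk. c k i *\<^sub>R x (a + i))
                           else (\<Sum>i\<le>mk. c k i *\<^sub>R g (x (a + i))))"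
    using R4[OF nzk] False unfolding a_def mk_def by (simp split: if_splits)
  have Sb: "(\<Sum>i\<le>mk. \<bar>c k i\<bar>) \<le> Sm"
    using LSk(1)[OF nzk hw] LSk(3)[OF nzk hw] Sm_bound mk0 unfolding mk_def by (meson order_trans)
  define e where "e j = c k (j - a)" for j
  define J where "J = {a..a+mk}"
  have finJ: "finite J" unfolding J_def by simp
  have e1: "(\<Sum>j\<in>J. e j) = 1"
    using LS' sum_shift_abs[of "c k" mk a] unfolding is_LS_min_def e_def J_def by simp
  have eS: "(\<Sum>j\<in>J. \<bar>e j\<bar>) \<le> Sm"
    using Sb sum_shift_abs[of "\<lambda>i. \<bar>c k i\<bar>" mk a] unfolding e_def J_def by simp
  have combo: "(\<Sum>i\<le>mk. c k i *\<^sub>R v (a + i)) = (\<Sum>j\<in>J. e j *\<^sub>R v j)" for v :: "nat \<Rightarrow> 'z::real_vector"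
    unfolding e_def J_def by (rule shift_combo)
  define \<rho> where "\<rho> = (\<Sum>i\<le>mk. c k i *\<^sub>R r (a + i))"
  have \<rho>J: "\<rho> = (\<Sum>j\<in>J. e j *\<^sub>R f (x j))" unfolding \<rho>_def combo using R1 by simp
  have mono: "\<And>i j. i \<le> j \<Longrightarrow> j \<le> k \<Longrightarrow> norm (r j) \<le> norm (r i)"
    using mono_r[OF I2] by blast
  have ra0: "norm (r a) \<le> c\<mu> * \<delta>^2" using mono[of 0 a] r0 ka by simp
  have dle1: "\<delta> \<le> 1" using del K0 mu by simp
  have d1: "\<delta>^2 \<le> 1" using dle1 del by (intro power_le_one) auto
  have d2: "\<delta>^2 \<le> \<delta>"
  proof -
    have "\<delta> * \<delta> \<le> \<delta> * 1" using dle1 del by (intro mult_left_mono) auto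
    then show ?thesis by (simp add: power2_eq_square)
  qed
  have ra1: "norm (r a) \<le> c\<mu>"
  proof -
    have "c\<mu> * \<delta>^2 \<le> c\<mu> * 1" using cm(1) d1 by (intro mult_left_mono) auto
    then show ?thesis using ra0 by simp
  qed
  define \<Delta> where "\<Delta> = norm (r a) / \<sigma>"
  have D0: "0 \<le> \<Delta>" unfolding \<Delta>_def using sig by simp
  have xin: "\<forall>j\<in>J. x j \<in> Sg \<and> norm (x j - xs) \<le> \<Delta>"
  proof
    fix j assume j: "j \<in> J"
    then have jk: "a \<le> j" "j \<le> k" using ka unfolding J_def by auto
    have "norm (x j - xs) \<le> norm (r j) / \<sigma>" using I1 jk by blast
    also have "\<dots> \<le> \<Delta>" unfolding \<Delta>_def using mono[OF jk] sig by (simp add: divide_right_mono)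
    finally show "x j \<in> Sg \<and> norm (x j - xs) \<le> \<Delta>" using I1 jk by blast
  qed
  have SD: "Sm * \<Delta> \<le> Sm * c\<mu> / \<sigma>"
    unfolding \<Delta>_def using ra1 sig Sm1 by (simp add: divide_right_mono mult_left_mono)
  have SD1: "Sm * \<Delta> \<le> 1" using SD cm'(1) by simp
  have SDr: "(NB + 2 * L' + 1) * (Sm * \<Delta>) < \<rho>0"
  proof -
    have "(NB + 2 * L' + 1) * (Sm * \<Delta>) \<le> (NB + 2 * L' + 1) * (Sm * c\<mu> / \<sigma>)"
      using SD NB0 LL by (intro mult_left_mono) auto
    then show ?thesis using cm'(2) by simp
  qed
  have SDr2: "Sm * \<Delta> < \<rho>0"
  proof -
    have "Sm * \<Delta> \<le> (NB + 2 * L' + 1) * (Sm * \<Delta>)"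
      using NB0 LL Sm1 D0 by (simp add: mult_le_cancel_right1 not_less)
    then show ?thesis using SDr by simp
  qed
  have est: "x (Suc k) \<in> V \<inter> Sg \<and> norm (r (Suc k)) \<le> K * norm \<rho> + Q * (Sm * \<Delta>)^2 \<and>
      (vP \<longrightarrow> (\<Sum>i\<le>mk. c k i *\<^sub>R x (a + i)) \<in> V)"
  proof (cases vP)
    case True
    note sP = stepP[OF finJ e1 eS xin D0 SDr2]
    have "x (Suc k) = g (\<Sum>j\<in>J. e j *\<^sub>R x j)" using xs1 True combo[of x] by simp
    moreover have "(\<Sum>i\<le>mk. c k i *\<^sub>R x (a + i)) \<in> V" using combo[of x] sP UV by auto
    ultimately show ?thesis using sP \<rho>J R1 True by simp
  next
    case False
    then have SgU: "Sg = UNIV" using vPU by simp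
    have xin': "\<forall>j\<in>J. norm (x j - xs) \<le> \<Delta>" using xin by blast
    note sA = stepA[OF SgU finJ e1 eS xin' D0 SD1 SDr]
    have "x (Suc k) = (\<Sum>j\<in>J. e j *\<^sub>R g (x j))" using xs1 False combo[of "\<lambda>j. g (x j)"] by simp
    then show ?thesis using sA \<rho>J R1 False SgU by simp
  qed
  have err: "Q * (Sm * \<Delta>)^2 \<le> (\<mu> - K) * \<delta>^2 * norm (r a)"
  proof -
    have "Q * (Sm * \<Delta>)^2 \<le> \<bar>Q\<bar> * (Sm * \<Delta>)^2" by (simp add: abs_ge_self mult_right_mono)
    also have "\<dots> = (\<bar>Q\<bar> * Sm^2 * norm (r a) / \<sigma>^2) * norm (r a)"
      unfolding \<Delta>_def using sig by (simp add: power2_eq_square field_simps)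
    also have "\<dots> \<le> (\<bar>Q\<bar> * Sm^2 * (c\<mu> * \<delta>^2) / \<sigma>^2) * norm (r a)"
      using ra0 sig by (intro mult_right_mono divide_right_mono mult_left_mono) auto
    also have "\<dots> = (\<bar>Q\<bar> * Sm^2 * c\<mu> / \<sigma>^2) * \<delta>^2 * norm (r a)" by (simp add: field_simps)
    also have "\<dots> \<le> (\<mu> - K) * \<delta>^2 * norm (r a)"
      using cm'(3) by (intro mult_right_mono) auto
    finally show ?thesis .
  qed
  have \<rho>rk: "norm \<rho> \<le> norm (r k)"
    using LS_min_le_combo[OF LS', of "{k}" "\<lambda>_. 1"] ka unfolding \<rho>_def by simp
  have k0: "0 < k" using ka mk0 by simp
  obtain k' where k': "k = Suc k'" using gr0_implies_Suc[OF k0] by blast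
  have nzk': "\<forall>j\<le>k'. r j \<noteq> 0" using nzk k' by simp
  have ak: "\<delta> * norm (r a) < norm (r k)"
  proof -
    have "Suc k' - m (Suc k') \<le> a \<and> a \<le> k'" using ka k' mk0 unfolding a_def mk_def by simp
    then show ?thesis using GR(2)[OF nzk'] k' by blast
  qed
  have dd: "\<delta>^2 * norm (r a) \<le> \<delta> * norm (r a)" using d2 by (simp add: mult_right_mono)
  have muK: "0 \<le> \<mu> - K" using mu by simp
  have c2: "norm (r (Suc k)) \<le> \<mu> * norm (r k)"
  proof -
    have "(\<mu> - K) * \<delta>^2 * norm (r a) \<le> (\<mu> - K) * norm (r k)"
      using dd ak muK by (simp add: mult.assoc mult_left_mono)
    moreover have "K * norm \<rho> \<le> K * norm (r k)" using \<rho>rk K0 by simp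
    ultimately show ?thesis using est err by (simp add: algebra_simps)
  qed
  have c3: "1 \<le> m (Suc k) \<longrightarrow> (\<forall>h\<in>affine hull (r ` {Suc k - m (Suc k)..k}). norm (r (Suc k)) \<le> \<mu> * norm h)"
  proof (intro impI ballI)
    fix h assume m1: "1 \<le> m (Suc k)" and h: "h \<in> affine hull (r ` {Suc k - m (Suc k)..k})"
    have "\<delta> * norm (r k) < norm (r (Suc k))" using GR(2)[OF nzk] m1 by auto
    moreover have "\<delta>^2 * norm (r a) \<le> \<delta> * norm (r k)"
      using ak del by (simp add: power2_eq_square mult.assoc mult_left_mono)
    ultimately have "(\<mu> - K) * \<delta>^2 * norm (r a) \<le> (\<mu> - K) * norm (r (Suc k))"
      using muK by (simp add: mult.assoc mult_left_mono)
    then have "norm (r (Suc k)) \<le> K * norm \<rho> + (\<mu> - K) * norm (r (Suc k))" using est err by simp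
    then have A1: "(1 - \<mu> + K) * norm (r (Suc k)) \<le> K * norm \<rho>" by (simp add: algebra_simps)
    have A2: "K * norm \<rho> \<le> (1 - \<mu> + K) * (\<mu> * norm \<rho>)"
    proof -
      have "K \<le> (1 - \<mu> + K) * \<mu>"
      proof -
        have "K * (1 - \<mu>) \<le> \<mu> * (1 - \<mu>)" using mu by (intro mult_right_mono) auto
        then show ?thesis by (simp add: algebra_simps)
      qed
      then show ?thesis by (simp add: mult_right_mono mult.assoc[symmetric])
    qed
    have pos: "0 < 1 - \<mu> + K" using mu K0 by simp
    have B: "norm (r (Suc k)) \<le> \<mu> * norm \<rho>"
      using A1 A2 pos by (meson mult_le_cancel_left_pos order_trans)
    have sub: "{Suc k - m (Suc k)..k} \<subseteq> {a..a+mk}"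
      using GR(1)[OF nzk] ka unfolding a_def mk_def by auto
    have "norm \<rho> \<le> norm h" unfolding \<rho>_def by (rule LS_min_le_hull[OF LS' sub h])
    then have "\<mu> * norm \<rho> \<le> \<mu> * norm h" using mu K0 by (simp add: mult_left_mono)
    then show "norm (r (Suc k)) \<le> \<mu> * norm h" using B by simp
  qed
  have c4: "vP \<and> 0 < m k \<longrightarrow> (\<Sum>i\<le>m k. c k i *\<^sub>R x (k - m k + i)) \<in> V"
    using est unfolding a_def mk_def by simp
  show ?thesis using est c2 c3 c4 by blast
qed

end


lemma pow_aux:
  fixes a :: real
  assumes "0 \<le> a"
  shows "(1 + a)^n \<le> 2^n * (1 + a^n)"
proof (cases "a \<le> 1")
  case True
  have "(1 + a)^n \<le> 2^n" using True assms by (intro power_mono) auto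
  also have "\<dots> \<le> 2^n * (1 + a^n)" using assms by simp
  finally show ?thesis .
next
  case False
  have "(1 + a)^n \<le> (2 * a)^n" using False assms by (intro power_mono) auto
  also have "\<dots> = 2^n * a^n" by (simp add: power_mult_distrib)
  also have "\<dots> \<le> 2^n * (1 + a^n)" by simp
  finally show ?thesis .
qed

context run begin

lemma x_small:
  assumes "norm (r j) \<le> norm (r 0)" "x j \<in> V \<inter> Sg"
  shows "x j \<in> U \<inter> Sg \<and> norm (x j - xs) \<le> norm (r j) / \<sigma>"
proof -
  have "\<sigma> * norm (x j - xs) \<le> norm (r j)" using as2 assms(2) R1 by simp
  then have b: "norm (x j - xs) \<le> norm (r j) / \<sigma>" using sig by (simp add: field_simps)
  have dle1: "\<delta>^2 \<le> 1" using del K0 mu by (intro power_le_one) auto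
  have "norm (r 0) \<le> c\<mu>"
  proof -
    have "c\<mu> * \<delta>^2 \<le> c\<mu> * 1" using cm(1) dle1 by (intro mult_left_mono) auto
    then show ?thesis using r0 by simp
  qed
  then have "norm (x j - xs) \<le> c\<mu> / \<sigma>" using b assms(1) sig by (smt (verit) divide_right_mono)
  also have "c\<mu> / \<sigma> \<le> (NB + 2 * L' + 1) * (Sm * c\<mu> / \<sigma>)"
  proof -
    have c0: "0 \<le> c\<mu> / \<sigma>" using cm(1) sig by simp
    have "1 * (c\<mu> / \<sigma>) \<le> Sm * (c\<mu> / \<sigma>)" using mult_right_mono[OF Sm1 c0] .
    also have t: "1 \<le> NB + 2 * L' + 1" using NB0 LL by simp
    have "Sm * (c\<mu> / \<sigma>) \<le> (NB + 2 * L' + 1) * (Sm * (c\<mu> / \<sigma>))"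
    proof -
      have p: "0 \<le> Sm * (c\<mu> / \<sigma>)" using Sm1 c0 by (intro mult_nonneg_nonneg) auto
      show ?thesis using mult_right_mono[OF t p] by simp
    qed
    finally show ?thesis by simp
  qed
  finally have "norm (x j - xs) < \<rho>0" using cm'(2) by simp
  then show ?thesis using in_ball_U b assms(2) by blast
qed

lemma inv:
  "(\<forall>j\<le>k. r j \<noteq> 0) \<Longrightarrow> (\<forall>j\<le>k. x j \<in> U \<inter> Sg \<and> norm (x j - xs) \<le> norm (r j) / \<sigma>) \<and>
     (\<forall>j<k. norm (r (Suc j)) \<le> \<mu> * norm (r j)) \<and> HW k"
proof (induction k)
  case 0
  have "x 0 \<in> V \<inter> Sg" using x0 UV by blast
  then have "x 0 \<in> U \<inter> Sg \<and> norm (x 0 - xs) \<le> norm (r 0) / \<sigma>" using x_small[of 0] by simp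
  moreover have "HW 0" unfolding HW_def using R2 by simp
  ultimately show ?case by simp
next
  case (Suc k)
  have nzk: "\<forall>j\<le>k. r j \<noteq> 0" using Suc.prems by simp
  note IH = Suc.IH[OF nzk]
  note S = step[OF nzk IH[THEN conjunct1] IH[THEN conjunct2, THEN conjunct1] IH[THEN conjunct2, THEN conjunct2]]
  have I2: "\<forall>j<Suc k. norm (r (Suc j)) \<le> \<mu> * norm (r j)"
    using IH S less_Suc_eq by auto
  have rS: "norm (r (Suc k)) \<le> norm (r 0)" using mono_r[OF I2, of 0 "Suc k"] by simp
  have xS: "x (Suc k) \<in> U \<inter> Sg \<and> norm (x (Suc k) - xs) \<le> norm (r (Suc k)) / \<sigma>"
    using x_small[OF rS] S by blast
  have I1: "\<forall>j\<le>Suc k. x j \<in> U \<inter> Sg \<and> norm (x j - xs) \<le> norm (r j) / \<sigma>"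
    using IH xS le_Suc_eq by auto
  have hw: "HW (Suc k)"
    unfolding HW_def
  proof (intro allI impI ballI)
    fix j h assume j: "Suc k - m (Suc k) < j \<and> j \<le> Suc k" and h: "h \<in> affine hull (r ` {Suc k - m (Suc k)..j - 1})"
    show "norm (r j) \<le> \<mu> * norm h"
    proof (cases "j = Suc k")
      case True
      then have "1 \<le> m (Suc k)" using j by simp
      then show ?thesis using S h True by simp
    next
      case False
      have mS: "m (Suc k) \<le> m k + 1" using GR(1)[OF nzk] .
      have j2: "k - m k < j \<and> j \<le> k" using j False mS by auto
      have sub: "affine hull (r ` {Suc k - m (Suc k)..j - 1}) \<subseteq> affine hull (r ` {k - m k..j - 1})"
        using mS by (intro hull_mono image_mono) auto
      then show ?thesis using IH h j2 unfolding HW_def by blast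
    qed
  qed
  show ?case using I1 I2 hw by blast
qed

lemma contr: "r k \<noteq> 0 \<Longrightarrow> norm (r (Suc k)) \<le> \<mu> * norm (r k)"
proof -
  assume "r k \<noteq> 0"
  then have nzk: "\<forall>j\<le>k. r j \<noteq> 0" using nz_before by blast
  note IH = inv[OF nzk]
  note S = step[OF nzk IH[THEN conjunct1] IH[THEN conjunct2, THEN conjunct1] IH[THEN conjunct2, THEN conjunct2]]
  then show ?thesis by blast
qed

lemma dclaim: "r k \<noteq> 0 \<Longrightarrow> 1 \<le> k - m k \<Longrightarrow> norm (r k) \<le> \<delta> * norm (r (k - m k - 1))"
proof (induction k)
  case 0 then show ?case by simp
next
  case (Suc k)
  have nz: "\<forall>j\<le>Suc k. r j \<noteq> 0" using Suc.prems(1) nz_before by blast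
  have nzk: "\<forall>j\<le>k. r j \<noteq> 0" using nz by simp
  show ?case
  proof (cases "m (Suc k) \<le> m k")
    case True
    note G = GR(3)[OF nzk True]
    have "Suc k - m (Suc k) - 1 = k - m (Suc k)" using G by simp
    then show ?thesis using G by simp
  next
    case False
    then have eq: "m (Suc k) = m k + 1" using GR(1)[OF nzk] by simp
    have i1: "Suc k - m (Suc k) = k - m k" using eq by simp
    have "r k \<noteq> 0" using nzk by simp
    then have "norm (r k) \<le> \<delta> * norm (r (k - m k - 1))" using Suc.IH Suc.prems(2) i1 by simp
    moreover have "norm (r (Suc k)) \<le> norm (r k)"
    proof -
      have "norm (r (Suc k)) \<le> \<mu> * norm (r k)" using contr \<open>r k \<noteq> 0\<close> by blast
      also have "\<dots> \<le> norm (r k)" using mu K0 by (intro mult_left_le_one_le) auto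
      finally show ?thesis .
    qed
    ultimately show ?thesis using i1 by simp
  qed
qed

lemma xV: "x k \<in> V"
proof (cases "\<forall>j\<le>k. r j \<noteq> 0")
  case True
  then show ?thesis using inv[OF True] UV by blast
next
  case False
  then have ex: "\<exists>j. r j = 0 \<and> j \<le> k" by auto
  define j0 where "j0 = (LEAST j. r j = 0 \<and> j \<le> k)"
  have j0: "r j0 = 0 \<and> j0 \<le> k" unfolding j0_def using LeastI_ex[OF ex] .
  have min: "\<And>j. j < j0 \<Longrightarrow> r j \<noteq> 0"
  proof -
    fix j assume "j < j0"
    then have "\<not> (r j = 0 \<and> j \<le> k)" unfolding j0_def using not_less_Least by blast
    then show "r j \<noteq> 0" using \<open>j < j0\<close> j0 by auto
  qed
  have "j0 \<noteq> 0"
  proof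
    assume "j0 = 0" then show False using j0 r0(1) by simp
  qed
  then obtain j1 where j1: "j0 = Suc j1" using not0_implies_Suc by blast
  have nz1: "\<forall>j\<le>j1. r j \<noteq> 0" using min j1 by auto
  note IH = inv[OF nz1]
  note S = step[OF nz1 IH[THEN conjunct1] IH[THEN conjunct2, THEN conjunct1] IH[THEN conjunct2, THEN conjunct2]]
  have "x k = x j0" using R3[of j0 k] j0 by simp
  then show ?thesis using S j1 by simp
qed

lemma final:
  "(\<forall>k. x k \<in> V) \<and>
   (\<forall>k. r k \<noteq> 0 \<longrightarrow>
      m k \<le> min k CARD('p) \<and>
      (0 < m k \<longrightarrow> (\<forall>d. is_LS_min r k (m k) d \<longrightarrow> (\<forall>i\<le>m k. d i = c k i))) \<and>
      (vP \<and> 0 < m k \<longrightarrow> (\<Sum>i\<le>m k. c k i *\<^sub>R x (k - m k + i)) \<in> V) \<and>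
      (\<forall>i\<le>m k. \<bar>c k i\<bar> \<le> (\<lambda>mm. 4 * 6 ^ mm) (m k) * (1 + (\<mu> / (1 - \<mu>)) ^ m k)) \<and>
      norm (r (Suc k)) \<le> \<mu> * norm (r k) \<and>
      (1 \<le> k - m k \<longrightarrow> norm (r k) \<le> \<delta> * norm (r (k - m k - 1))))"
proof -
  have A: "\<forall>k. x k \<in> V" using xV by blast
  have B: "r k \<noteq> 0 \<Longrightarrow>
      m k \<le> min k CARD('p) \<and>
      (0 < m k \<longrightarrow> (\<forall>d. is_LS_min r k (m k) d \<longrightarrow> (\<forall>i\<le>m k. d i = c k i))) \<and>
      (vP \<and> 0 < m k \<longrightarrow> (\<Sum>i\<le>m k. c k i *\<^sub>R x (k - m k + i)) \<in> V) \<and>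
      (\<forall>i\<le>m k. \<bar>c k i\<bar> \<le> (\<lambda>mm. 4 * 6 ^ mm) (m k) * (1 + (\<mu> / (1 - \<mu>)) ^ m k)) \<and>
      norm (r (Suc k)) \<le> \<mu> * norm (r k) \<and>
      (1 \<le> k - m k \<longrightarrow> norm (r k) \<le> \<delta> * norm (r (k - m k - 1)))" for k
  proof -
  assume rk: "r k \<noteq> 0"
  have nzk: "\<forall>j\<le>k. r j \<noteq> 0" using rk nz_before by blast
  note IH = inv[OF nzk]
  note S = step[OF nzk IH[THEN conjunct1] IH[THEN conjunct2, THEN conjunct1] IH[THEN conjunct2, THEN conjunct2]]
  have hw: "HW k" using IH by blast
  have f1: "m k \<le> min k CARD('p)"
  proof (cases "m k = 0")
    case True then show ?thesis by simp
  next
    case False then show ?thesis using mle[of k] LSk(3)[OF nzk hw] by simp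
  qed
  have f2: "0 < m k \<longrightarrow> (\<forall>d. is_LS_min r k (m k) d \<longrightarrow> (\<forall>i\<le>m k. d i = c k i))"
    using LSk(2)[OF nzk hw] by blast
  have f3: "vP \<and> 0 < m k \<longrightarrow> (\<Sum>i\<le>m k. c k i *\<^sub>R x (k - m k + i)) \<in> V" using S by blast
  have f5: "norm (r (Suc k)) \<le> \<mu> * norm (r k)" using S by blast
  have f6: "1 \<le> k - m k \<longrightarrow> norm (r k) \<le> \<delta> * norm (r (k - m k - 1))" using dclaim rk by blast
  have f4: "\<forall>i\<le>m k. \<bar>c k i\<bar> \<le> (\<lambda>mm. 4 * 6 ^ mm) (m k) * (1 + (\<mu> / (1 - \<mu>)) ^ m k)"
  proof (intro allI impI)
  fix i assume i: "i \<le> m k"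
  define a where "a = \<mu> / (1 - \<mu>)"
  have a0: "0 \<le> a" unfolding a_def using mu K0 by simp
  have Rpos: "1 \<le> 4 * 6 ^ m k * (1 + a ^ m k)"
  proof -
    have "1 \<le> (6::real) ^ m k" by simp
    moreover have "1 \<le> 1 + a ^ m k" using a0 by simp
    ultimately have "1 * 1 \<le> 6 ^ m k * (1 + a ^ m k)" by (intro mult_mono) auto
    then show ?thesis by simp
  qed
  show "\<bar>c k i\<bar> \<le> (\<lambda>mm. 4 * 6 ^ mm) (m k) * (1 + (\<mu> / (1 - \<mu>)) ^ m k)"
  proof (cases "m k = 0")
    case True
    then have "c k i = 1" using R4[OF nzk] i by simp
    then show ?thesis using Rpos unfolding a_def by simp
  next
    case False
    have s1: "\<bar>c k i\<bar> \<le> (\<Sum>i\<le>m k. \<bar>c k i\<bar>)" using i by (intro member_le_sum) auto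
    have s2: "(\<Sum>i\<le>m k. \<bar>c k i\<bar>) \<le> 2 * (2*(3/(1-\<mu>))^(m k) - 1)" using LSk(1)[OF nzk hw] False by simp
    have q: "3/(1-\<mu>) = 3 * (1 + a)" unfolding a_def using mu by (simp add: field_simps)
    have s3: "2 * (2*(3/(1-\<mu>))^(m k) - 1) \<le> 4 * (3 * (1 + a))^(m k)" unfolding q by simp
    have s4: "(3 * (1 + a))^(m k) = 3^(m k) * (1 + a)^(m k)" by (rule power_mult_distrib)
    have s5: "(3::real)^(m k) * (1 + a)^(m k) \<le> 3^(m k) * (2^(m k) * (1 + a^(m k)))"
      using pow_aux[OF a0] by (intro mult_left_mono) auto
    have s6: "(3::real)^(m k) * (2^(m k) * (1 + a^(m k))) = 6^(m k) * (1 + a^(m k))"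
    proof -
      have "(3::real)^(m k) * 2^(m k) = (3 * 2)^(m k)" by (rule power_mult_distrib[symmetric])
      then show ?thesis by (simp add: mult.assoc[symmetric])
    qed
    have "\<bar>c k i\<bar> \<le> 4 * (6^(m k) * (1 + a^(m k)))" using s1 s2 s3 s4 s5 s6 by linarith
    then show ?thesis unfolding a_def by simp
  qed
  qed
  show ?thesis using f1 f2 f3 f4 f5 f6 by (intro conjI) assumption+
  qed
  show ?thesis by (intro conjI[OF A] allI impI) (erule B)
qed

end


lemma cmu_choice:
  fixes \<sigma> S N \<rho> d q :: real
  assumes "0 < \<sigma>" "1 \<le> S" "0 \<le> N" "0 < \<rho>" "0 < d" "0 \<le> q"
  shows "\<exists>c>0. S * c / \<sigma> \<le> 1 \<and> N * (S * c / \<sigma>) < \<rho> \<and> q * S^2 * c / \<sigma>^2 \<le> d"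
proof -
  define c1 where "c1 = \<sigma> / S"
  define c2 where "c2 = \<sigma> * \<rho> / (2 * S * (N + 1))"
  define c3 where "c3 = d * \<sigma>^2 / ((q + 1) * S^2)"
  define c where "c = min c1 (min c2 c3)"
  have S0: "0 < S" using assms by simp
  have p1: "0 < c1" unfolding c1_def using assms S0 by simp
  have p2: "0 < c2" unfolding c2_def using assms S0 by (simp add: add_nonneg_pos)
  have p3: "0 < c3" unfolding c3_def using assms S0 by (simp add: add_nonneg_pos)
  have c0: "0 < c" unfolding c_def using p1 p2 p3 by simp
  have cc1: "c \<le> c1" and cc2: "c \<le> c2" and cc3: "c \<le> c3" unfolding c_def by auto
  have a: "S * c / \<sigma> \<le> 1"
  proof -
    have "S * c / \<sigma> \<le> S * c1 / \<sigma>" using cc1 S0 assms(1) by (simp add: divide_right_mono)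
    also have "\<dots> = 1" unfolding c1_def using S0 assms(1) by simp
    finally show ?thesis .
  qed
  have b: "N * (S * c / \<sigma>) < \<rho>"
  proof -
    have "N * (S * c / \<sigma>) \<le> N * (S * c2 / \<sigma>)"
      using cc2 S0 assms(1,3) by (intro mult_left_mono divide_right_mono) auto
    also have "\<dots> = N * \<rho> / (2 * (N + 1))"
    proof -
      have N1: "N + 1 \<noteq> 0" using assms(3) by simp
      have e: "c2 = \<sigma> / S * (\<rho> / (2 * (N + 1)))" unfolding c2_def by (simp add: mult.assoc)
      have "S * c2 / \<sigma> = \<rho> / (2 * (N + 1))" unfolding e using S0 assms(1) by simp
      then show ?thesis by simp
    qed
    also have "\<dots> < \<rho>"
    proof -
      have n0: "0 \<le> N * \<rho>" using assms(3,4) by simp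
      have lt: "N * \<rho> < \<rho> * (2 * (N + 1))" using n0 assms(4) by (simp add: algebra_simps)
      have "0 < 2 * (N + 1)" using assms(3) by simp
      then show ?thesis using lt by (simp add: pos_divide_less_eq)
    qed
    finally show ?thesis .
  qed
  have cc: "q * S^2 * c / \<sigma>^2 \<le> d"
  proof -
    have "q * S^2 * c / \<sigma>^2 \<le> q * S^2 * c3 / \<sigma>^2"
      using cc3 assms(6) by (intro divide_right_mono mult_left_mono) auto
    also have "\<dots> = (q / (q + 1)) * d"
    proof -
      have e: "c3 = \<sigma>^2 / S^2 * (d / (q + 1))" unfolding c3_def by (simp add: mult.commute)
      show ?thesis unfolding e using S0 assms(1) by simp
    qed
    also have "\<dots> \<le> 1 * d"
    proof (rule mult_right_mono)
      show "q / (q + 1) \<le> 1" using assms(6) by simp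
    qed (use assms(5) in simp)
    also have "\<dots> = d" by simp
    finally show ?thesis .
  qed
  show ?thesis using c0 a b cc by blast
qed


theorem theorem3p2:
  shows "\<exists>C::nat \<Rightarrow> real. (\<forall>mm. 0 < C mm) \<and>
   (\<forall>(\<Sigma>::(real^'n) set) (V::(real^'n) set) (f::real^'n \<Rightarrow> real^'p) (g::real^'n \<Rightarrow> real^'n)
      xs K \<sigma> U L L' M.
     is_smooth_submanifold \<Sigma> \<and> open V \<and> C_k_on 2 V f \<and> C_k_on 2 V g \<and> g ` V \<subseteq> \<Sigma> \<and>
     xs \<in> V \<inter> \<Sigma> \<and> g xs = xs \<and> f xs = 0 \<and>
     0 < K \<and> K < 1 \<and> (\<forall>x \<in> V \<inter> g -` V \<inter> \<Sigma>. norm (f (g x)) \<le> K * norm (f x)) \<and>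
     0 < \<sigma> \<and> (\<forall>x \<in> V \<inter> \<Sigma>. \<sigma> * norm (x - xs) \<le> norm (f x)) \<and>
     open U \<and> xs \<in> U \<and> U \<subseteq> V \<inter> g -` V \<and>
     (\<forall>x\<in>U. \<forall>y\<in>U.
        norm (f x - f y) \<le> 2 * onorm (frechet_derivative f (at xs)) * norm (x - y) \<and>
        norm (f (g x) - f (g y)) \<le>
          2 * onorm (frechet_derivative f (at xs) \<circ> frechet_derivative g (at xs)) * norm (x - y)) \<and>
     0 < L \<and> 0 < L' \<and>
     (\<forall>x\<in>U. norm (f x - frechet_derivative f (at xs) (x - xs)) \<le> L / 2 * norm (x - xs)^2 \<and>
             norm (g x - xs - frechet_derivative g (at xs) (x - xs)) \<le> L' / 2 * norm (x - xs)^2) \<and>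
     (\<forall>x\<in>U. (\<exists>!y. y \<in> \<Sigma> \<and> (\<forall>z\<in>\<Sigma>. dist x y \<le> dist x z)) \<and> closest_point \<Sigma> x \<in> U) \<and>
     smooth_on U (closest_point \<Sigma>) \<and>
     0 < M \<and>
     (\<forall>x\<in>U. norm (closest_point \<Sigma> x - (xs + closest_point (tangent_space \<Sigma> xs) (x - xs)))
               \<le> M / 2 * norm (x - xs)^2)
   \<longrightarrow>
     (\<forall>\<mu>. K < \<mu> \<and> \<mu> < 1 \<longrightarrow>
       (\<exists>c\<mu>>0. \<forall>\<delta>. 0 < \<delta> \<and> \<delta> < K \<longrightarrow>
         (\<forall>vP x r m c.
            (vP \<or> \<Sigma> = UNIV) \<and> x 0 \<in> U \<inter> \<Sigma> \<and> 0 < norm (r 0) \<and> norm (r 0) \<le> c\<mu> * \<delta>^2 \<and>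
            AAP_run vP f g \<delta> x r m c
          \<longrightarrow>
            (\<forall>k. x k \<in> V) \<and>
            (\<forall>k. r k \<noteq> 0 \<longrightarrow>
               m k \<le> min k CARD('p) \<and>
               (0 < m k \<longrightarrow> (\<forall>d. is_LS_min r k (m k) d \<longrightarrow> (\<forall>i\<le>m k. d i = c k i))) \<and>
               (vP \<and> 0 < m k \<longrightarrow> (\<Sum>i\<le>m k. c k i *\<^sub>R x (k - m k + i)) \<in> V) \<and>
               (\<forall>i\<le>m k. \<bar>c k i\<bar> \<le> C (m k) * (1 + (\<mu> / (1 - \<mu>)) ^ m k)) \<and>
               norm (r (Suc k)) \<le> \<mu> * norm (r k) \<and>
               (1 \<le> k - m k \<longrightarrow> norm (r k) \<le> \<delta> * norm (r (k - m k - 1))))))))"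
proof -
  let ?C = "\<lambda>mm::nat. (4::real) * 6 ^ mm"
  show ?thesis
  proof (intro exI[of _ ?C] conjI allI impI)
    show "0 < ?C mm" for mm by simp
  next
    fix \<Sigma> :: "(real^'n) set" and V :: "(real^'n) set" and f :: "real^'n \<Rightarrow> real^'p" and g :: "real^'n \<Rightarrow> real^'n"
      and xs K \<sigma> U L L' M \<mu>
    assume H: "is_smooth_submanifold \<Sigma> \<and> open V \<and> C_k_on 2 V f \<and> C_k_on 2 V g \<and> g ` V \<subseteq> \<Sigma> \<and>
     xs \<in> V \<inter> \<Sigma> \<and> g xs = xs \<and> f xs = 0 \<and>
     0 < K \<and> K < 1 \<and> (\<forall>x \<in> V \<inter> g -` V \<inter> \<Sigma>. norm (f (g x)) \<le> K * norm (f x)) \<and>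
     0 < \<sigma> \<and> (\<forall>x \<in> V \<inter> \<Sigma>. \<sigma> * norm (x - xs) \<le> norm (f x)) \<and>
     open U \<and> xs \<in> U \<and> U \<subseteq> V \<inter> g -` V \<and>
     (\<forall>x\<in>U. \<forall>y\<in>U.
        norm (f x - f y) \<le> 2 * onorm (frechet_derivative f (at xs)) * norm (x - y) \<and>
        norm (f (g x) - f (g y)) \<le>
          2 * onorm (frechet_derivative f (at xs) \<circ> frechet_derivative g (at xs)) * norm (x - y)) \<and>
     0 < L \<and> 0 < L' \<and>
     (\<forall>x\<in>U. norm (f x - frechet_derivative f (at xs) (x - xs)) \<le> L / 2 * norm (x - xs)^2 \<and>
             norm (g x - xs - frechet_derivative g (at xs) (x - xs)) \<le> L' / 2 * norm (x - xs)^2) \<and>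
     (\<forall>x\<in>U. (\<exists>!y. y \<in> \<Sigma> \<and> (\<forall>z\<in>\<Sigma>. dist x y \<le> dist x z)) \<and> closest_point \<Sigma> x \<in> U) \<and>
     smooth_on U (closest_point \<Sigma>) \<and>
     0 < M \<and>
     (\<forall>x\<in>U. norm (closest_point \<Sigma> x - (xs + closest_point (tangent_space \<Sigma> xs) (x - xs)))
               \<le> M / 2 * norm (x - xs)^2)"
      and mu: "K < \<mu> \<and> \<mu> < 1"
    have sub: "is_smooth_submanifold \<Sigma>" using H by (elim conjE) assumption
    have VC1: "C_k_on 2 V f" using H by (elim conjE) assumption
    have VC2: "C_k_on 2 V g" using H by (elim conjE) assumption
    have gV: "g ` V \<subseteq> \<Sigma>" using H by (elim conjE) assumption
    have xsV1: "xs \<in> V" using H by (elim conjE IntE) assumption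
    have xsV2: "xs \<in> \<Sigma>" using H by (elim conjE IntE) assumption
    have K0: "0 < K" using H by (elim conjE) assumption
    have as1: "\<forall>x \<in> V \<inter> g -` V \<inter> \<Sigma>. norm (f (g x)) \<le> K * norm (f x)" using H by (elim conjE) assumption
    have sig: "0 < \<sigma>" using H by (elim conjE) assumption
    have as2: "\<forall>x \<in> V \<inter> \<Sigma>. \<sigma> * norm (x - xs) \<le> norm (f x)" using H by (elim conjE) assumption
    have oU: "open U" using H by (elim conjE) assumption
    have xsU: "xs \<in> U" using H by (elim conjE) assumption
    have UV: "U \<subseteq> V \<inter> g -` V" using H by (elim conjE) assumption
    have lip: "\<forall>x\<in>U. \<forall>y\<in>U.
        norm (f x - f y) \<le> 2 * onorm (frechet_derivative f (at xs)) * norm (x - y) \<and>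
        norm (f (g x) - f (g y)) \<le>
          2 * onorm (frechet_derivative f (at xs) \<circ> frechet_derivative g (at xs)) * norm (x - y)" using H by (elim conjE) assumption
    have LL1: "0 < L" using H by (elim conjE) assumption
    have LL2: "0 < L'" using H by (elim conjE) assumption
    have LL3: "0 < M" using H by (elim conjE) assumption
    have tay: "\<forall>x\<in>U. norm (f x - frechet_derivative f (at xs) (x - xs)) \<le> L / 2 * norm (x - xs)^2 \<and>
             norm (g x - xs - frechet_derivative g (at xs) (x - xs)) \<le> L' / 2 * norm (x - xs)^2" using H by (elim conjE) assumption
    have cpU: "\<forall>x\<in>U. (\<exists>!y. y \<in> \<Sigma> \<and> (\<forall>z\<in>\<Sigma>. dist x y \<le> dist x z)) \<and> closest_point \<Sigma> x \<in> U" using H by (elim conjE) assumption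
    have cpM: "\<forall>x\<in>U. norm (closest_point \<Sigma> x - (xs + closest_point (tangent_space \<Sigma> xs) (x - xs)))
               \<le> M / 2 * norm (x - xs)^2" using H by (elim conjE) assumption
    have fdiff: "f differentiable (at xs)" by (rule C2_differentiable[OF VC1 xsV1])
    have gdiff: "g differentiable (at xs)" by (rule C2_differentiable[OF VC2 xsV1])
    have Tsub: "subspace (tangent_space \<Sigma> xs)" by (rule tangent_space_subspace[OF sub xsV2])
    obtain \<rho>0 where rho0: "0 < \<rho>0" "ball xs \<rho>0 \<subseteq> U" using oU xsU openE by blast
    have Sm1: "1 \<le> Smax \<mu> CARD('p)"
    proof -
      have "1 \<le> (3/(1-\<mu>))^CARD('p)" using mu K0 by (intro one_le_power) (simp add: field_simps)
      then show ?thesis unfolding Smax_def by simp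
    qed
    obtain c\<mu> where cm: "0 < c\<mu>" "Smax \<mu> CARD('p) * c\<mu> / \<sigma> \<le> 1"
      "(\<bar>onorm (frechet_derivative g (at xs))\<bar> + 2 * L' + 1) * (Smax \<mu> CARD('p) * c\<mu> / \<sigma>) < \<rho>0"
      "\<bar>K * L + 2 * \<bar>onorm (frechet_derivative f (at xs))\<bar> * L' + 2 * K * \<bar>onorm (frechet_derivative f (at xs))\<bar> * M
         + 2 * \<bar>onorm (frechet_derivative f (at xs) \<circ> frechet_derivative g (at xs))\<bar> * M\<bar>
         * (Smax \<mu> CARD('p))^2 * c\<mu> / \<sigma>^2 \<le> \<mu> - K"
    proof -
      have "\<exists>c>0. Smax \<mu> CARD('p) * c / \<sigma> \<le> 1 \<and>
        (\<bar>onorm (frechet_derivative g (at xs))\<bar> + 2 * L' + 1) * (Smax \<mu> CARD('p) * c / \<sigma>) < \<rho>0 \<and>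
        \<bar>K * L + 2 * \<bar>onorm (frechet_derivative f (at xs))\<bar> * L' + 2 * K * \<bar>onorm (frechet_derivative f (at xs))\<bar> * M
         + 2 * \<bar>onorm (frechet_derivative f (at xs) \<circ> frechet_derivative g (at xs))\<bar> * M\<bar>
         * (Smax \<mu> CARD('p))^2 * c / \<sigma>^2 \<le> \<mu> - K"
        by (rule cmu_choice) (use sig Sm1 LL1 LL2 LL3 rho0 mu in auto)
      then show ?thesis using that by blast
    qed
    show "\<exists>c\<mu>>0. \<forall>\<delta>. 0 < \<delta> \<and> \<delta> < K \<longrightarrow>
         (\<forall>vP x r m c.
            (vP \<or> \<Sigma> = UNIV) \<and> x 0 \<in> U \<inter> \<Sigma> \<and> 0 < norm (r 0) \<and> norm (r 0) \<le> c\<mu> * \<delta>^2 \<and>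
            AAP_run vP f g \<delta> x r m c
          \<longrightarrow>
            (\<forall>k. x k \<in> V) \<and>
            (\<forall>k. r k \<noteq> 0 \<longrightarrow>
               m k \<le> min k CARD('p) \<and>
               (0 < m k \<longrightarrow> (\<forall>d. is_LS_min r k (m k) d \<longrightarrow> (\<forall>i\<le>m k. d i = c k i))) \<and>
               (vP \<and> 0 < m k \<longrightarrow> (\<Sum>i\<le>m k. c k i *\<^sub>R x (k - m k + i)) \<in> V) \<and>
               (\<forall>i\<le>m k. \<bar>c k i\<bar> \<le> ?C (m k) * (1 + (\<mu> / (1 - \<mu>)) ^ m k)) \<and>
               norm (r (Suc k)) \<le> \<mu> * norm (r k) \<and>
               (1 \<le> k - m k \<longrightarrow> norm (r k) \<le> \<delta> * norm (r (k - m k - 1)))))"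
    proof (rule exI[of _ c\<mu>], rule conjI[OF cm(1)], intro allI impI)
      fix \<delta> vP and x :: "nat \<Rightarrow> real^'n" and r :: "nat \<Rightarrow> real^'p" and m c
      assume d: "0 < \<delta> \<and> \<delta> < K"
        and R: "(vP \<or> \<Sigma> = UNIV) \<and> x 0 \<in> U \<inter> \<Sigma> \<and> 0 < norm (r 0) \<and> norm (r 0) \<le> c\<mu> * \<delta>^2 \<and>
            AAP_run vP f g \<delta> x r m c"
      have d1: "0 < \<delta>" "\<delta> < K" using d by auto
      have R1: "vP \<or> \<Sigma> = UNIV" "x 0 \<in> U \<inter> \<Sigma>" "0 < norm (r 0)" "norm (r 0) \<le> c\<mu> * \<delta>^2"
        "AAP_run vP f g \<delta> x r m c" using R by auto
      have mu1: "K < \<mu>" "\<mu> < 1" using mu by auto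
      interpret RR: run \<Sigma> V f g xs K \<sigma> U L L' M \<rho>0 \<mu> \<delta> vP x r m c c\<mu>
        by (unfold_locales; (fact | (rule fdiff gdiff))?)
      show "(\<forall>k. x k \<in> V) \<and>
            (\<forall>k. r k \<noteq> 0 \<longrightarrow>
               m k \<le> min k CARD('p) \<and>
               (0 < m k \<longrightarrow> (\<forall>d. is_LS_min r k (m k) d \<longrightarrow> (\<forall>i\<le>m k. d i = c k i))) \<and>
               (vP \<and> 0 < m k \<longrightarrow> (\<Sum>i\<le>m k. c k i *\<^sub>R x (k - m k + i)) \<in> V) \<and>
               (\<forall>i\<le>m k. \<bar>c k i\<bar> \<le> ?C (m k) * (1 + (\<mu> / (1 - \<mu>)) ^ m k)) \<and>
               norm (r (Suc k)) \<le> \<mu> * norm (r k) \<and>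
               (1 \<le> k - m k \<longrightarrow> norm (r k) \<le> \<delta> * norm (r (k - m k - 1))))"
        by (rule RR.final)
    qed
  qed
qed

end
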